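(* Let $n>6$. Let $S$ be an independent set of size $(n-1)!$ in the permutation graph $P(n)$ and let $v_S\in\mathbb{R}^{S(n)}$ be its characteristic vector. Then $v_S-\frac1n\mathbf{1}$ lies in the $[n-1,1]$-module.
   Context: The permutation graph $P(n)$ has vertex set $S(n)$, and $\pi,\sigma$ are adjacent iff $\pi(i)\neq\sigma(i)$ for all $i$. $\mathbf 1$ is the all-ones vector in $\mathbb{R}^{S(n)}$. For a partition $\lambda\vdash n$ with irreducible character $\chi_\lambda$ of $S(n)$, let $E_\lambda$ be the $n!\times n!$ matrix indexed by $S(n)$ with $(E_\lambda)_{\pi,\sigma}=\frac{\chi_\lambda(1)}{n!}\chi_\lambda(\pi^{-1}\sigma)$; the $\lambda$-module is the column space of $E_\lambda$ (a subspace of $\mathbb{R}^{S(n)}$ of dimension $\chi_\lambda(1)^2$). *)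

theory Defs
  imports "HOL-Combinatorics.Permutations" Complex_Main
begin

definition perms :: "nat \<Rightarrow> (nat \<Rightarrow> nat) set" where
  "perms n = {p. p permutes {..<n}}"

definition perm_adj :: "nat \<Rightarrow> (nat \<Rightarrow> nat) \<Rightarrow> (nat \<Rightarrow> nat) \<Rightarrow> bool" where
  "perm_adj n p q \<longleftrightarrow> (\<forall>i<n. p i \<noteq> q i)"

definition perm_independent :: "nat \<Rightarrow> (nat \<Rightarrow> nat) set \<Rightarrow> bool" where
  "perm_independent n S \<longleftrightarrow> S \<subseteq> perms n \<and>
     (\<forall>p\<in>S. \<forall>q\<in>S. p \<noteq> q \<longrightarrow> \<not> perm_adj n p q)"

text \<open>Irreducible character of S(n) for the partition [n-1,1] (standard representation):
  number of fixed points minus one.\<close>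
definition chi_std :: "nat \<Rightarrow> (nat \<Rightarrow> nat) \<Rightarrow> real" where
  "chi_std n p = real (card {i\<in>{..<n}. p i = i}) - 1"

definition E_std :: "nat \<Rightarrow> (nat \<Rightarrow> nat) \<Rightarrow> (nat \<Rightarrow> nat) \<Rightarrow> real" where
  "E_std n p q = chi_std n id / fact n * chi_std n (inv p \<circ> q)"

text \<open>The [n-1,1]-module: column space of E_std, as a subspace of functions on S(n)
  (only values on perms n matter).\<close>
definition module_std :: "nat \<Rightarrow> ((nat \<Rightarrow> nat) \<Rightarrow> real) set" where
  "module_std n = {v. \<exists>w. \<forall>p\<in>perms n. v p = (\<Sum>q\<in>perms n. E_std n p q * w q)}"

end

theory Submission
  imports Defs
begin



lemma hall_theorem:
  fixes I :: "'i set" and A :: "'i \<Rightarrow> 'a set"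
  assumes "finite I" "\<forall>i\<in>I. finite (A i)"
    and "\<forall>J\<subseteq>I. card J \<le> card (\<Union>(A ` J))"
  shows "\<exists>f. inj_on f I \<and> (\<forall>i\<in>I. f i \<in> A i)"
  using assms
proof (induction "card I" arbitrary: I A rule: less_induct)
  case less
  show ?case
  proof (cases "I = {}")
    case True then show ?thesis by auto
  next
    case False
    show ?thesis
    proof (cases "\<forall>J. J \<subseteq> I \<and> J \<noteq> {} \<and> J \<noteq> I \<longrightarrow> card J < card (\<Union>(A ` J))")
      case True
      from False obtain i where i: "i \<in> I" by auto
      have "card {i} \<le> card (\<Union>(A ` {i}))" using less.prems(3) i by (meson empty_subsetI insert_subset)
      hence "card {i} \<le> card (A i)" by simp
      hence "A i \<noteq> {}" by auto
      then obtain x where x: "x \<in> A i" by auto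
      define I' where "I' = I - {i}"
      define A' where "A' = (\<lambda>j. A j - {x})"
      have cI': "card I' < card I" unfolding I'_def using i less.prems(1) by (metis card_Diff1_less)
      have hall': "\<forall>J\<subseteq>I'. card J \<le> card (\<Union>(A' ` J))"
      proof (intro allI impI)
        fix J assume J: "J \<subseteq> I'"
        show "card J \<le> card (\<Union>(A' ` J))"
        proof (cases "J = {}")
          case True then show ?thesis by simp
        next
          case False
          have JI: "J \<subseteq> I" "J \<noteq> I" using J i unfolding I'_def by auto
          have lt: "card J < card (\<Union>(A ` J))" using True JI False by blast
          have "finite J" using JI(1) less.prems(1) by (rule finite_subset)
          hence fin: "finite (\<Union>(A ` J))" using JI(1) less.prems(2) by auto
          have eq: "\<Union>(A' ` J) = \<Union>(A ` J) - {x}" unfolding A'_def by auto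
          have "card (\<Union>(A ` J)) \<le> card (\<Union>(A' ` J)) + 1"
            unfolding eq using fin by (cases "x \<in> \<Union>(A ` J)") (simp_all add: card_Diff_singleton_if)
          then show ?thesis using lt by linarith
        qed
      qed
      have "\<exists>f. inj_on f I' \<and> (\<forall>j\<in>I'. f j \<in> A' j)"
        apply (rule less.hyps[OF cI'])
        using less.prems(1,2) hall' unfolding I'_def A'_def by auto
      then obtain f where f: "inj_on f I'" "\<forall>j\<in>I'. f j \<in> A' j" by auto
      define g where "g = f(i := x)"
      have "inj_on g I"
      proof -
        have "I = insert i I'" unfolding I'_def using i by auto
        moreover have "inj_on g I'" using f(1) unfolding g_def I'_def by (simp add: inj_on_def)
        moreover have "g i \<notin> g ` I'" using f(2) unfolding g_def A'_def I'_def by auto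
        moreover have "i \<notin> I'" unfolding I'_def by auto
        ultimately show ?thesis by (simp add: inj_on_insert)
      qed
      moreover have "\<forall>j\<in>I. g j \<in> A j" using f(2) x unfolding g_def A'_def I'_def by auto
      ultimately show ?thesis by blast
    next
      case False2: False
      then obtain J0 where J0': "J0 \<subseteq> I" "J0 \<noteq> {}" "J0 \<noteq> I" "\<not> card J0 < card (\<Union>(A ` J0))" by blast
      hence J0: "J0 \<subseteq> I" "J0 \<noteq> {}" "J0 \<noteq> I" "card (\<Union>(A ` J0)) \<le> card J0" by auto
      have finJ0: "finite J0" using J0(1) less.prems(1) finite_subset by auto
      have cJ0: "card J0 < card I" using J0(1,3) less.prems(1) by (intro psubset_card_mono) auto
      have "\<exists>g. inj_on g J0 \<and> (\<forall>j\<in>J0. g j \<in> A j)"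
        apply (rule less.hyps[OF cJ0])
        using finJ0 less.prems(2,3) J0(1) by auto
      then obtain g where g: "inj_on g J0" "\<forall>j\<in>J0. g j \<in> A j" by auto
      define U0 where "U0 = \<Union>(A ` J0)"
      have "card J0 \<le> card U0" unfolding U0_def by (rule less.prems(3)[rule_format, OF J0(1)])
      hence cU0: "card U0 = card J0" using J0(4) unfolding U0_def by simp
      have finU0: "finite U0" unfolding U0_def using J0(1) less.prems(2) finJ0 by auto
      define I2 where "I2 = I - J0"
      define A2 where "A2 = (\<lambda>j. A j - U0)"
      have cI2: "card I2 < card I"
      proof -
        have "card I2 = card I - card J0" unfolding I2_def using J0(1) finJ0 by (simp add: card_Diff_subset)
        moreover have "card J0 > 0" using finJ0 J0(2) by (simp add: card_gt_0_iff)
        moreover have "card J0 \<le> card I" using cJ0 by simp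
        ultimately show ?thesis by linarith
      qed
      have hall2: "\<forall>K\<subseteq>I2. card K \<le> card (\<Union>(A2 ` K))"
      proof (intro allI impI)
        fix K assume K: "K \<subseteq> I2"
        have KJ: "K \<inter> J0 = {}" "K \<union> J0 \<subseteq> I" using K J0(1) unfolding I2_def by auto
        have finK: "finite K" using K less.prems(1) unfolding I2_def using finite_subset by auto
        have h1: "card (K \<union> J0) \<le> card (\<Union>(A ` (K \<union> J0)))" by (rule less.prems(3)[rule_format, OF KJ(2)])
        have h2: "card (K \<union> J0) = card K + card J0" using KJ(1) finK finJ0 by (simp add: card_Un_disjoint)
        have fin: "finite (\<Union>(A ` (K \<union> J0)))" using KJ(2) less.prems(2) finK finJ0 by auto
        have sub: "U0 \<subseteq> \<Union>(A ` (K \<union> J0))" unfolding U0_def by auto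
        have eq: "\<Union>(A2 ` K) = \<Union>(A ` (K \<union> J0)) - U0" unfolding A2_def U0_def by auto
        have "card (\<Union>(A2 ` K)) = card (\<Union>(A ` (K \<union> J0))) - card U0"
          unfolding eq using sub fin finU0 by (simp add: card_Diff_subset)
        then show "card K \<le> card (\<Union>(A2 ` K))" using h1 h2 cU0 by linarith
      qed
      have "\<exists>h. inj_on h I2 \<and> (\<forall>j\<in>I2. h j \<in> A2 j)"
      proof (rule less.hyps[OF cI2])
        show "finite I2" using less.prems(1) unfolding I2_def by simp
        show "\<forall>i\<in>I2. finite (A2 i)" using less.prems(2) unfolding A2_def I2_def by simp
        show "\<forall>J\<subseteq>I2. card J \<le> card (\<Union>(A2 ` J))" by (rule hall2)
      qed
      then obtain h where h: "inj_on h I2" "\<forall>j\<in>I2. h j \<in> A2 j" by auto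
      define f where "f = (\<lambda>j. if j \<in> J0 then g j else h j)"
      have "inj_on f I"
      proof (rule inj_onI)
        fix a b assume ab: "a \<in> I" "b \<in> I" "f a = f b"
        show "a = b"
        proof (cases "a \<in> J0"; cases "b \<in> J0")
          assume "a \<in> J0" "b \<in> J0" then show ?thesis using ab(3) g(1) unfolding f_def by (simp add: inj_on_eq_iff)
        next
          assume a: "a \<in> J0" "b \<notin> J0"
          have "f a \<in> U0" using a g(2) unfolding f_def U0_def by auto
          moreover have "f b \<notin> U0" using a ab(1,2) h(2) unfolding f_def A2_def I2_def by auto
          ultimately show ?thesis using ab(3) by metis
        next
          assume a: "a \<notin> J0" "b \<in> J0"
          have "f b \<in> U0" using a g(2) unfolding f_def U0_def by auto
          moreover have "f a \<notin> U0" using a ab(1,2) h(2) unfolding f_def A2_def I2_def by auto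
          ultimately show ?thesis using ab(3) by metis
        next
          assume "a \<notin> J0" "b \<notin> J0"
          moreover have "a \<in> I2" "b \<in> I2" using ab calculation unfolding I2_def by auto
          ultimately show ?thesis using ab(3) h(1) unfolding f_def by (simp add: inj_on_eq_iff)
        qed
      qed
      moreover have "\<forall>j\<in>I. f j \<in> A j" using g(2) h(2) unfolding f_def A2_def I2_def by auto
      ultimately show ?thesis by blast
    qed
  qed
qed




definition clique :: "nat \<Rightarrow> (nat \<Rightarrow> nat) set \<Rightarrow> bool" where
  "clique n K \<longleftrightarrow> K \<subseteq> perms n \<and> (\<forall>p\<in>K. \<forall>q\<in>K. p \<noteq> q \<longrightarrow> perm_adj n p q)"

lemma finite_perms: "finite (perms n)"
  unfolding perms_def by (rule finite_permutations) simp

lemma card_perms: "card (perms n) = fact n"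
  unfolding perms_def by (rule card_permutations) simp_all

lemma perms_compose: "p \<in> perms n \<Longrightarrow> q \<in> perms n \<Longrightarrow> p \<circ> q \<in> perms n"
  unfolding perms_def by (simp add: permutes_compose)

lemma perms_inv: "p \<in> perms n \<Longrightarrow> inv p \<in> perms n"
  unfolding perms_def by (simp add: permutes_inv)

lemma perms_id: "id \<in> perms n"
  unfolding perms_def by simp

lemma perms_lt: "p \<in> perms n \<Longrightarrow> i < n \<Longrightarrow> p i < n"
  unfolding perms_def using permutes_in_image[of p "{..<n}" i] by simp

lemma perms_out: "p \<in> perms n \<Longrightarrow> \<not> i < n \<Longrightarrow> p i = i"
  unfolding perms_def using permutes_not_in[of p "{..<n}" i] by simp

lemma perms_inv_apply: "p \<in> perms n \<Longrightarrow> p (inv p x) = x" "p \<in> perms n \<Longrightarrow> inv p (p x) = x"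
  unfolding perms_def by (simp_all add: permutes_inverses)

lemma perms_inj: "p \<in> perms n \<Longrightarrow> p x = p y \<longleftrightarrow> x = y"
proof
  assume p: "p \<in> perms n" and "p x = p y"
  then have "inv p (p x) = inv p (p y)" by simp
  then show "x = y" using perms_inv_apply(2)[OF p] by simp
qed simp

lemma clique_finite: "clique n K \<Longrightarrow> finite K"
  unfolding clique_def using finite_perms finite_subset by blast

lemma clique_extend:
  assumes K: "clique n K" and cK: "card K < n"
  shows "\<exists>p\<in>perms n. \<forall>q\<in>K. perm_adj n p q"
proof -
  have finK: "finite K" using K by (rule clique_finite)
  have KP: "K \<subseteq> perms n" using K unfolding clique_def by auto
  have adj: "\<And>p q. p \<in> K \<Longrightarrow> q \<in> K \<Longrightarrow> p \<noteq> q \<Longrightarrow> i < n \<Longrightarrow> p i \<noteq> q i" for i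
    using K unfolding clique_def perm_adj_def by blast
  have adjeq: "\<And>p q i. p \<in> K \<Longrightarrow> q \<in> K \<Longrightarrow> i < n \<Longrightarrow> p i = q i \<Longrightarrow> p = q"
    using adj by blast
  define k where "k = n - card K"
  have kpos: "k > 0" unfolding k_def using cK by simp
  define A where "A = (\<lambda>i. {j. j < n \<and> (\<forall>q\<in>K. q i \<noteq> j)})"
  define C where "C = (\<lambda>j. {i. i < n \<and> j \<in> A i})"
  have cA: "card (A i) = k" if i: "i < n" for i
  proof -
    have eq: "A i = {..<n} - (\<lambda>q. q i) ` K" unfolding A_def by auto
    have sub: "(\<lambda>q. q i) ` K \<subseteq> {..<n}" using KP i perms_lt by auto
    have inj: "inj_on (\<lambda>q. q i) K" using adjeq i by (intro inj_onI) blast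
    show ?thesis unfolding eq k_def using sub inj finK
      by (simp add: card_Diff_subset card_image)
  qed
  have cC: "card (C j) = k" if j: "j < n" for j
  proof -
    have eq: "C j = {..<n} - (\<lambda>q. inv q j) ` K"
    proof (rule set_eqI)
      fix i
      have "i \<in> (\<lambda>q. inv q j) ` K \<longleftrightarrow> (\<exists>q\<in>K. q i = j)"
      proof
        assume "i \<in> (\<lambda>q. inv q j) ` K"
        then obtain q where q: "q \<in> K" "i = inv q j" by blast
        then have "q i = j" using KP perms_inv_apply(1)[of q n j] by auto
        then show "\<exists>q\<in>K. q i = j" using q by blast
      next
        assume "\<exists>q\<in>K. q i = j"
        then obtain q where q: "q \<in> K" "q i = j" by blast
        then have "inv q j = i" using KP perms_inv_apply(2)[of q n i] by auto
        then show "i \<in> (\<lambda>q. inv q j) ` K" using q by blast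
      qed
      then show "i \<in> C j \<longleftrightarrow> i \<in> {..<n} - (\<lambda>q. inv q j) ` K"
        unfolding C_def A_def using j by auto
    qed
    have sub: "(\<lambda>q. inv q j) ` K \<subseteq> {..<n}" using KP j perms_lt perms_inv by blast
    have inj: "inj_on (\<lambda>q. inv q j) K"
    proof (rule inj_onI)
      fix p q assume pq: "p \<in> K" "q \<in> K" "inv p j = inv q j"
      have "p (inv p j) = j" using pq(1) KP perms_inv_apply(1)[of p n j] by auto
      moreover have "q (inv q j) = j" using pq(2) KP perms_inv_apply(1)[of q n j] by auto
      moreover have "inv p j < n" using pq KP j perms_lt perms_inv by blast
      ultimately show "p = q" using adjeq[of p q "inv p j"] pq by simp
    qed
    show ?thesis unfolding eq k_def using sub inj finK
      by (simp add: card_Diff_subset card_image)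
  qed
  have hall: "\<forall>J\<subseteq>{..<n}. card J \<le> card (\<Union>(A ` J))"
  proof (intro allI impI)
    fix J assume J: "J \<subseteq> {..<n}"
    define N where "N = \<Union>(A ` J)"
    have finJ: "finite J" using J finite_subset by blast
    have NS: "N \<subseteq> {..<n}" unfolding N_def A_def by auto
    have finN: "finite N" using NS finite_subset by blast
    have finA: "finite (A i)" for i unfolding A_def by auto
    have finC: "finite (C j)" for j unfolding C_def by auto
    have "card (Sigma J A) = (\<Sum>i\<in>J. card (A i))" using finJ finA by (simp add: card_SigmaI)
    also have "\<dots> = (\<Sum>i\<in>J. k)" using J cA by (intro sum.cong) auto
    finally have c1: "card (Sigma J A) = k * card J" by simp
    have "card (Sigma N C) = (\<Sum>j\<in>N. card (C j))" using finN finC by (simp add: card_SigmaI)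
    also have "\<dots> = (\<Sum>j\<in>N. k)" using NS cC by (intro sum.cong) auto
    finally have c2: "card (Sigma N C) = k * card N" by simp
    have "Sigma J A \<subseteq> (\<lambda>(j, i). (i, j)) ` Sigma N C"
    proof
      fix x assume x: "x \<in> Sigma J A"
      then obtain i j where ij: "x = (i, j)" "i \<in> J" "j \<in> A i" by auto
      have "(j, i) \<in> Sigma N C" using ij J unfolding N_def C_def by auto
      then show "x \<in> (\<lambda>(j, i). (i, j)) ` Sigma N C" using ij by force
    qed
    hence "card (Sigma J A) \<le> card ((\<lambda>(j, i). (i, j)) ` Sigma N C)"
      by (intro card_mono) (auto intro: finite_imageI simp: finN finC)
    also have "\<dots> \<le> card (Sigma N C)" by (rule card_image_le) (simp add: finN finC)
    finally have "k * card J \<le> k * card N" using c1 c2 by simp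
    then show "card J \<le> card (\<Union>(A ` J))" using kpos unfolding N_def by simp
  qed
  have finAll: "\<forall>i\<in>{..<n}. finite (A i)" unfolding A_def by auto
  obtain f where f: "inj_on f {..<n}" "\<forall>i\<in>{..<n}. f i \<in> A i"
    using hall_theorem[OF _ finAll hall] by auto
  define p where "p = (\<lambda>x. if x < n then f x else x)"
  have "p permutes {..<n}"
  proof (rule inj_imp_permutes)
    show "inj_on p {..<n}" using f(1) unfolding p_def inj_on_def by auto
    show "\<And>x. x \<in> {..<n} \<Longrightarrow> p x \<in> {..<n}" using f(2) unfolding p_def A_def by auto
    show "\<And>i. i \<notin> {..<n} \<Longrightarrow> p i = i" unfolding p_def by auto
  qed simp
  hence "p \<in> perms n" unfolding perms_def by simp
  moreover have "\<forall>q\<in>K. perm_adj n p q"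
  proof
    fix q assume q: "q \<in> K"
    show "perm_adj n p q" unfolding perm_adj_def
    proof (intro allI impI)
      fix i assume i: "i < n"
      then have "f i \<in> A i" using f(2) by simp
      then have "q i \<noteq> f i" using q unfolding A_def by blast
      moreover have "p i = f i" using i unfolding p_def by simp
      ultimately show "p i \<noteq> q i" by simp
    qed
  qed
  ultimately show ?thesis by blast
qed

lemma clique_complete:
  assumes "clique n K0" "card K0 \<le> n"
  shows "\<exists>K. K0 \<subseteq> K \<and> clique n K \<and> card K = n"
  using assms
proof (induction "n - card K0" arbitrary: K0 rule: less_induct)
  case less
  show ?case
  proof (cases "card K0 = n")
    case True then show ?thesis using less.prems by blast
  next
    case False
    hence lt: "card K0 < n" using less.prems by simp
    obtain p where p: "p \<in> perms n" "\<forall>q\<in>K0. perm_adj n p q" using clique_extend[OF less.prems(1) lt] by blast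
    have pK: "p \<notin> K0"
    proof
      assume "p \<in> K0"
      then have "perm_adj n p p" using p by auto
      then show False using lt unfolding perm_adj_def by auto
    qed
    have finK: "finite K0" using less.prems(1) by (rule clique_finite)
    have cl: "clique n (insert p K0)"
      using less.prems(1) p unfolding clique_def perm_adj_def by (auto simp: eq_commute)
    have c: "card (insert p K0) = Suc (card K0)" using pK finK by simp
    have "\<exists>K. insert p K0 \<subseteq> K \<and> clique n K \<and> card K = n"
    proof -
      have "n - card (insert p K0) < n - card K0" using c lt by simp
      moreover have "card (insert p K0) \<le> n" using c lt by simp
      ultimately show ?thesis using less.hyps[of "insert p K0"] cl by blast
    qed
    then show ?thesis by blast
  qed
qed




definition ind :: "(nat \<Rightarrow> nat) set \<Rightarrow> (nat \<Rightarrow> nat) \<Rightarrow> nat" where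
  "ind S p = (if p \<in> S then 1 else 0)"

lemma card_compose_right:
  assumes k: "k \<in> perms n" and SP: "S \<subseteq> perms n"
  shows "card {g\<in>perms n. g \<circ> k \<in> S} = card S"
proof -
  have "bij_betw (\<lambda>g. g \<circ> k) {g\<in>perms n. g \<circ> k \<in> S} S"
  proof (rule bij_betw_imageI)
    show "inj_on (\<lambda>g. g \<circ> k) {g\<in>perms n. g \<circ> k \<in> S}"
    proof (rule inj_onI)
      fix g h assume "g \<circ> k = h \<circ> k"
      then have "g \<circ> k \<circ> inv k = h \<circ> k \<circ> inv k" by simp
      moreover have "k \<circ> inv k = id" using k unfolding perms_def by (simp add: permutes_inv_o)
      ultimately show "g = h" by (simp add: o_assoc[symmetric])
    qed
    show "(\<lambda>g. g \<circ> k) ` {g\<in>perms n. g \<circ> k \<in> S} = S"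
    proof
      show "(\<lambda>g. g \<circ> k) ` {g\<in>perms n. g \<circ> k \<in> S} \<subseteq> S" by auto
      show "S \<subseteq> (\<lambda>g. g \<circ> k) ` {g\<in>perms n. g \<circ> k \<in> S}"
      proof
        fix s assume s: "s \<in> S"
        have kk: "inv k \<circ> k = id" using k unfolding perms_def by (simp add: permutes_inv_o)
        have e: "s \<circ> inv k \<circ> k = s" by (simp add: comp_assoc kk)
        have "s \<circ> inv k \<in> perms n" using s SP k by (blast intro: perms_compose perms_inv)
        then show "s \<in> (\<lambda>g. g \<circ> k) ` {g\<in>perms n. g \<circ> k \<in> S}"
          using e s by (intro image_eqI[of _ _ "s \<circ> inv k"]) auto
      qed
    qed
  qed
  then show ?thesis by (rule bij_betw_same_card)
qed

lemma clique_translate: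
  assumes "clique n K" "g \<in> perms n"
  shows "clique n ((\<lambda>k. g \<circ> k) ` K)"
  unfolding clique_def
proof (intro conjI ballI impI)
  show "(\<lambda>k. g \<circ> k) ` K \<subseteq> perms n" using assms unfolding clique_def by (auto intro: perms_compose)
next
  fix x y assume x: "x \<in> (\<lambda>k. g \<circ> k) ` K" and y: "y \<in> (\<lambda>k. g \<circ> k) ` K" and xy: "x \<noteq> y"
  obtain a where a: "a \<in> K" "x = g \<circ> a" using x by blast
  obtain b where b: "b \<in> K" "y = g \<circ> b" using y by blast
  have "a \<noteq> b" using xy a b by auto
  then have "perm_adj n a b" using assms(1) a b unfolding clique_def by blast
  then show "perm_adj n x y" using a b assms(2) unfolding perm_adj_def by (simp add: perms_inj)
qed

lemma clique_meets_once:
  assumes ind: "perm_independent n S" and cS: "card S = fact (n - 1)" and n: "n \<ge> 1"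
    and K: "clique n K" and cK: "card K = n"
  shows "card (S \<inter> K) = 1"
proof -
  define P where "P = perms n"
  have SP: "S \<subseteq> P" using ind unfolding perm_independent_def P_def by auto
  have finS: "finite S" using SP finite_perms finite_subset unfolding P_def by blast
  have finK: "finite K" using K by (rule clique_finite)
  have KP: "K \<subseteq> P" using K unfolding clique_def P_def by auto
  define c where "c = (\<lambda>g. card (S \<inter> (\<lambda>k. g \<circ> k) ` K))"
  have c_le: "c g \<le> 1" if g: "g \<in> P" for g
  proof -
    have cl: "clique n ((\<lambda>k. g \<circ> k) ` K)" using K g clique_translate unfolding P_def by blast
    have "\<forall>x\<in>S \<inter> (\<lambda>k. g \<circ> k) ` K. \<forall>y\<in>S \<inter> (\<lambda>k. g \<circ> k) ` K. x = y"
    proof (intro ballI)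
      fix x y assume x: "x \<in> S \<inter> (\<lambda>k. g \<circ> k) ` K" and y: "y \<in> S \<inter> (\<lambda>k. g \<circ> k) ` K"
      show "x = y"
      proof (rule ccontr)
        assume "x \<noteq> y"
        then have "perm_adj n x y" using cl x y unfolding clique_def by blast
        moreover have "\<not> perm_adj n x y" using ind x y \<open>x \<noteq> y\<close> unfolding perm_independent_def by blast
        ultimately show False by blast
      qed
    qed
    then show ?thesis unfolding c_def using finS by (simp add: card_le_Suc0_iff_eq)
  qed
  have c_sum: "c g = (\<Sum>k\<in>K. ind S (g \<circ> k))" if g: "g \<in> P" for g
  proof -
    have inj: "inj_on (\<lambda>k. g \<circ> k) K"
    proof (rule inj_onI)
      fix a b assume "g \<circ> a = g \<circ> b"
      then have "inv g \<circ> g \<circ> a = inv g \<circ> g \<circ> b" by (simp add: comp_assoc)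
      moreover have "inv g \<circ> g = id" using g unfolding P_def perms_def by (simp add: permutes_inv_o)
      ultimately show "a = b" by simp
    qed
    have "S \<inter> (\<lambda>k. g \<circ> k) ` K = (\<lambda>k. g \<circ> k) ` {k\<in>K. g \<circ> k \<in> S}" by auto
    then have "c g = card {k\<in>K. g \<circ> k \<in> S}" unfolding c_def
      using inj by (simp add: card_image inj_on_subset)
    also have "\<dots> = (\<Sum>k\<in>K. ind S (g \<circ> k))" unfolding ind_def
      using finK by (simp add: sum.If_cases Int_def)
    finally show ?thesis .
  qed
  have "(\<Sum>g\<in>P. c g) = (\<Sum>g\<in>P. \<Sum>k\<in>K. ind S (g \<circ> k))" using c_sum by (rule sum.cong[OF refl])
  also have "\<dots> = (\<Sum>k\<in>K. \<Sum>g\<in>P. ind S (g \<circ> k))" by (rule sum.swap)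
  also have "\<dots> = (\<Sum>k\<in>K. card S)"
  proof (rule sum.cong[OF refl])
    fix k assume k: "k \<in> K"
    have "(\<Sum>g\<in>P. ind S (g \<circ> k)) = card {g\<in>P. g \<circ> k \<in> S}" unfolding ind_def
      using finite_perms by (simp add: sum.If_cases P_def Int_def)
    also have "\<dots> = card S" using card_compose_right[of k n S] k KP SP unfolding P_def by blast
    finally show "(\<Sum>g\<in>P. ind S (g \<circ> k)) = card S" .
  qed
  also have "\<dots> = n * fact (n - 1)" using cK cS by simp
  also have "\<dots> = fact n" using n by (cases n) auto
  finally have sumc: "(\<Sum>g\<in>P. c g) = card P" unfolding P_def by (simp add: card_perms)
  have "c id = 1"
  proof (rule ccontr)
    assume "c id \<noteq> 1"
    then have lt: "c id < 1" using c_le[of id] perms_id unfolding P_def by fastforce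
    have "(\<Sum>g\<in>P. c g) < (\<Sum>g\<in>P. 1)"
      by (rule sum_strict_mono_ex1) (use finite_perms c_le lt perms_id in \<open>auto simp: P_def\<close>)
    then show False using sumc by simp
  qed
  moreover have "(\<lambda>k. id \<circ> k) ` K = K" by simp
  ultimately show ?thesis unfolding c_def by simp
qed

lemma trade:
  assumes ind: "perm_independent n S" and cS: "card S = fact (n - 1)" and n: "n \<ge> 2"
    and p1: "p1 \<in> perms n" and p2: "p2 \<in> perms n" and adj: "perm_adj n p1 p2"
    and q1: "q1 \<in> perms n" and q2: "q2 \<in> perms n"
    and sw: "\<forall>i<n. (q1 i = p1 i \<and> q2 i = p2 i) \<or> (q1 i = p2 i \<and> q2 i = p1 i)"
  shows "ind S p1 + ind S p2 = ind S q1 + ind S q2"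
proof -
  have "p1 0 \<noteq> p2 0" using adj n unfolding perm_adj_def by simp
  then have ne: "p1 \<noteq> p2" by auto
  have cl0: "clique n {p1, p2}" using p1 p2 adj unfolding clique_def perm_adj_def by auto
  have c0: "card {p1, p2} \<le> n" using ne n by simp
  obtain K where K: "{p1, p2} \<subseteq> K" "clique n K" "card K = n"
    using clique_complete[OF cl0 c0] by blast
  have finK: "finite K" using K(2) by (rule clique_finite)
  define R where "R = K - {p1, p2}"
  have finR: "finite R" unfolding R_def using finK by simp
  have RK: "R \<subseteq> K" unfolding R_def by auto
  have Radj: "r i \<noteq> p1 i" "r i \<noteq> p2 i" if "r \<in> R" "i < n" for r i
    using K(2) that K(1) unfolding R_def clique_def perm_adj_def by auto
  have Kdec: "K = insert p1 (insert p2 R)" using K(1) unfolding R_def by auto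
  have n0: "0 < n" using n by simp
  have q1R: "q1 \<notin> R"
  proof
    assume "q1 \<in> R"
    then show False using Radj[of q1 0] sw n0 by auto
  qed
  have q2R: "q2 \<notin> R"
  proof
    assume "q2 \<in> R"
    then show False using Radj[of q2 0] sw n0 by auto
  qed
  have p1R: "p1 \<notin> R" "p2 \<notin> R" unfolding R_def by auto
  have qq: "perm_adj n q1 q2" unfolding perm_adj_def
  proof (intro allI impI)
    fix i assume i: "i < n"
    have "(q1 i = p1 i \<and> q2 i = p2 i) \<or> (q1 i = p2 i \<and> q2 i = p1 i)" using sw i by blast
    moreover have "p1 i \<noteq> p2 i" using adj i unfolding perm_adj_def by blast
    ultimately show "q1 i \<noteq> q2 i" by auto
  qed
  have qne: "q1 \<noteq> q2" using qq n0 unfolding perm_adj_def by auto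
  have qr: "perm_adj n q r" if q: "q = q1 \<or> q = q2" and r: "r \<in> R" for q r
    unfolding perm_adj_def
  proof (intro allI impI)
    fix i assume i: "i < n"
    have "q i = p1 i \<or> q i = p2 i" using sw i q by blast
    then show "q i \<noteq> r i" using Radj[OF r i] by auto
  qed
  have sym: "perm_adj n x y \<Longrightarrow> perm_adj n y x" for x y unfolding perm_adj_def by auto
  define K' where "K' = insert q1 (insert q2 R)"
  have cl': "clique n K'"
    unfolding clique_def K'_def
  proof (intro conjI ballI impI)
    show "insert q1 (insert q2 R) \<subseteq> perms n" using q1 q2 K(2) RK unfolding clique_def by auto
  next
    fix x y assume x: "x \<in> insert q1 (insert q2 R)" and y: "y \<in> insert q1 (insert q2 R)" and xy: "x \<noteq> y"
    have rr: "perm_adj n x y" if "x \<in> R" "y \<in> R" "x \<noteq> y"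
      using K(2) that RK unfolding clique_def by blast
    show "perm_adj n x y"
    proof (cases "x \<in> R")
      case xR: True
      show ?thesis
      proof (cases "y \<in> R")
        case True then show ?thesis using rr xR xy by blast
      next
        case False then have "y = q1 \<or> y = q2" using y by auto
        then show ?thesis using qr xR sym by blast
      qed
    next
      case xR: False
      then have xq: "x = q1 \<or> x = q2" using x by auto
      show ?thesis
      proof (cases "y \<in> R")
        case True then show ?thesis using qr xq by blast
      next
        case False then have "y = q1 \<or> y = q2" using y by auto
        then show ?thesis using xq xy qq sym by auto
      qed
    qed
  qed
  have cK': "card K' = n"
  proof -
    have "card K = Suc (Suc (card R))" using Kdec p1R ne finR by simp
    moreover have "card K' = Suc (Suc (card R))" unfolding K'_def using q1R q2R qne finR by simp
    ultimately show ?thesis using K(3) by simp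
  qed
  have m1: "card (S \<inter> K) = 1" using clique_meets_once[OF ind cS _ K(2) K(3)] n by simp
  have m2: "card (S \<inter> K') = 1" using clique_meets_once[OF ind cS _ cl' cK'] n by simp
  have ins: "card (S \<inter> insert x A) = card (S \<inter> A) + ind S x" if xA: "x \<notin> A" and fA: "finite A" for x A
  proof (cases "x \<in> S")
    case True
    then have e: "S \<inter> insert x A = insert x (S \<inter> A)" by auto
    have "x \<notin> S \<inter> A" using xA by auto
    then show ?thesis unfolding e ind_def using True fA by simp
  next
    case False
    then have e: "S \<inter> insert x A = S \<inter> A" by auto
    show ?thesis unfolding e ind_def using False by simp
  qed
  have a1: "p1 \<notin> insert p2 R" using ne p1R by auto
  have a2: "q1 \<notin> insert q2 R" using qne q1R by auto
  have "card (S \<inter> K) = card (S \<inter> insert p2 R) + ind S p1"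
    unfolding Kdec by (rule ins[OF a1]) (simp add: finR)
  also have "card (S \<inter> insert p2 R) = card (S \<inter> R) + ind S p2" by (rule ins[OF p1R(2) finR])
  finally have e1: "card (S \<inter> K) = card (S \<inter> R) + ind S p2 + ind S p1" .
  have "card (S \<inter> K') = card (S \<inter> insert q2 R) + ind S q1"
    unfolding K'_def by (rule ins[OF a2]) (simp add: finR)
  also have "card (S \<inter> insert q2 R) = card (S \<inter> R) + ind S q2" by (rule ins[OF q2R finR])
  finally have e2: "card (S \<inter> K') = card (S \<inter> R) + ind S q2 + ind S q1" .
  note e1 e2
  show ?thesis using m1 m2 e1 e2 by simp
qed




lemma ex_out:
  assumes "finite B" "card B < card A" shows "\<exists>x\<in>A. x \<notin> B"
proof (rule ccontr)
  assume "\<not> (\<exists>x\<in>A. x \<notin> B)"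
  then have "A \<subseteq> B" by auto
  then have "card A \<le> card B" using assms(1) by (rule card_mono[rotated])
  then show False using assms(2) by simp
qed

lemma card_compl: "X \<subseteq> {..<n::nat} \<Longrightarrow> card ({..<n} - X) = n - card X"
  by (metis card_Diff_subset card_lessThan finite_lessThan finite_subset)

lemma card_ins_le: "finite A \<Longrightarrow> card (insert x A) \<le> Suc (card A)"
  by (simp add: card_insert_if)

locale Fsys =
  fixes F :: "nat set \<Rightarrow> nat" and n :: nat
  assumes n7: "n \<ge> 7"
  and bin: "\<And>X. F X \<le> 1"
  and C: "\<And>X. X \<subseteq> {..<n} \<Longrightarrow> 2 \<le> card X \<Longrightarrow> card X + 2 \<le> n \<Longrightarrow> F X + F ({..<n} - X) = 1"
  and R: "\<And>B a b. B \<subseteq> {..<n} \<Longrightarrow> 2 \<le> card B \<Longrightarrow> card B + 4 \<le> n \<Longrightarrow> a < n \<Longrightarrow> b < n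
           \<Longrightarrow> a \<notin> B \<Longrightarrow> b \<notin> B \<Longrightarrow> a \<noteq> b \<Longrightarrow> F {a, b} + F B = F (insert a (insert b B)) + 1"
  and I: "\<And>A B x. A \<subseteq> {..<n} \<Longrightarrow> B \<subseteq> {..<n} \<Longrightarrow> A \<union> B = {..<n} \<Longrightarrow> A \<inter> B = {x}
           \<Longrightarrow> 2 \<le> card A \<Longrightarrow> card A + 2 \<le> n \<Longrightarrow> 2 \<le> card B \<Longrightarrow> card B + 2 \<le> n
           \<Longrightarrow> F A = 1 \<Longrightarrow> F B = 1 \<Longrightarrow> False"
begin

abbreviation "U \<equiv> {..<n}"

lemma F01: "F X = 0 \<or> F X = 1" using bin[of X] by auto

lemma S1:
  assumes "B \<subseteq> U" "2 \<le> card B" "card B + 4 \<le> n" "a < n" "b < n" "a \<notin> B" "b \<notin> B" "a \<noteq> b" "F B = 0"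
  shows "F {a, b} = 1" "F (insert a (insert b B)) = 0"
proof -
  have e: "F {a, b} + F B = F (insert a (insert b B)) + 1" using R assms(1-8) by blast
  then show "F {a, b} = 1" "F (insert a (insert b B)) = 0" using assms(9) bin[of "{a,b}"] by simp_all
qed

lemma S1':
  assumes "B \<subseteq> U" "2 \<le> card B" "card B + 4 \<le> n" "a < n" "b < n" "a \<notin> B" "b \<notin> B" "a \<noteq> b" "F B = 1"
  shows "F (insert a (insert b B)) = F {a, b}"
proof -
  have e: "F {a, b} + F B = F (insert a (insert b B)) + 1" using R assms(1-8) by blast
  then show ?thesis using assms(9) by simp
qed

lemma even_good:
  assumes allgood: "\<And>a b. a < n \<Longrightarrow> b < n \<Longrightarrow> a \<noteq> b \<Longrightarrow> F {a, b} = 1"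
  shows "X \<subseteq> U \<Longrightarrow> card X = 2 * (k + 1) \<Longrightarrow> card X + 2 \<le> n \<Longrightarrow> F X = 1"
proof (induction k arbitrary: X)
  case 0
  then obtain a b where ab: "X = {a, b}" "a \<noteq> b" by (auto simp: card_2_iff)
  then show ?case using allgood 0 by auto
next
  case (Suc k)
  have finX: "finite X" using Suc.prems(1) finite_subset by blast
  have "X \<noteq> {}" using Suc.prems(2) by auto
  then obtain a where a: "a \<in> X" by auto
  have "card (X - {a}) > 0" using Suc.prems(2) a finX by simp
  then obtain b where b: "b \<in> X - {a}" by (metis card_gt_0_iff ex_in_conv)
  define B where "B = X - {a, b}"
  have cB: "card B = 2 * (k + 1)" unfolding B_def using Suc.prems(2) a b finX
    by (simp add: card_Diff_subset)
  have BU: "B \<subseteq> U" unfolding B_def using Suc.prems(1) by auto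
  have FB: "F B = 1" using Suc.IH[OF BU cB] cB Suc.prems(2,3) by simp
  have Xe: "X = insert a (insert b B)" unfolding B_def using a b by auto
  have "F {a, b} + F B = F (insert a (insert b B)) + 1"
    using R[of B a b] BU cB Suc.prems a b unfolding B_def by auto
  moreover have "F {a, b} = 1" using allgood a b Suc.prems(1) by auto
  ultimately show ?case using FB Xe by simp
qed

lemma exists_bad: "\<exists>a b. a < n \<and> b < n \<and> a \<noteq> b \<and> F {a, b} = 0"
proof (rule ccontr)
  assume "\<not> ?thesis"
  then have allgood: "\<And>a b. a < n \<Longrightarrow> b < n \<Longrightarrow> a \<noteq> b \<Longrightarrow> F {a, b} = 1" using F01 by blast
  show False
  proof (cases "even n")
    case True
    have X: "{0, 1} \<subseteq> U" "card {0::nat, 1} = 2" using n7 by auto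
    have F1: "F {0, 1} = 1" using allgood n7 by simp
    have cY: "card (U - {0, 1}) = 2 * ((n - 4) div 2 + 1)"
      using X True n7 by (simp add: card_Diff_subset)
    have F2: "F (U - {0, 1}) = 1" using even_good[OF allgood _ cY] n7 cY by simp
    have "F {0, 1} + F (U - {0, 1}) = 1" using C[of "{0, 1}"] X n7 by simp
    then show False using F1 F2 by simp
  next
    case False
    define A where "A = {0::nat, 1, 2, 3}"
    define B where "B = {3::nat..<n}"
    have AU: "A \<subseteq> U" unfolding A_def using n7 by auto
    have cA: "card A = 2 * (1 + 1)" unfolding A_def by simp
    have FA: "F A = 1" using even_good[OF allgood AU cA] cA n7 by simp
    have BU: "B \<subseteq> U" unfolding B_def by auto
    have cB: "card B = 2 * ((n - 5) div 2 + 1)" unfolding B_def using False n7 by simp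
    have FB: "F B = 1" using even_good[OF allgood BU cB] cB n7 by simp
    have "A \<union> B = U" unfolding A_def B_def using n7 by auto
    moreover have "A \<inter> B = {3}" unfolding A_def B_def using n7 by auto
    moreover have cB3: "card B = n - 3" unfolding B_def by simp
    moreover have "2 \<le> card B" "card B + 2 \<le> n" using cB3 n7 by simp_all
    ultimately show False using I[OF AU BU _ _ _ _ _ _ FA FB] cA n7 by simp
  qed
qed

lemma no_disjoint_bad:
  assumes "a < n" "b < n" "c < n" "d < n" "a \<noteq> b" "c \<noteq> d" "a \<noteq> c" "a \<noteq> d" "b \<noteq> c" "b \<noteq> d"
    "F {a, b} = 0" "F {c, d} = 0"
  shows False
proof -
  have "F {a, b} = 1"
    by (rule S1(1)[of "{c, d}"]) (use assms n7 in auto)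
  then show False using assms by simp
qed

lemma outside_good:
  assumes "B \<subseteq> U" "2 \<le> card B" "card B + 4 \<le> n" "F B = 0" "a < n" "b < n" "a \<notin> B" "b \<notin> B" "a \<noteq> b"
  shows "F {a, b} = 1"
  using S1(1)[OF assms(1-3,5-9,4)] .

end

context Fsys
begin

lemma card3: "card {a, b, c::nat} \<le> 3"
  using card_ins_le[of "{b, c}" a] card_ins_le[of "{c}" b] by simp

lemma card4: "card {a, b, c, d::nat} \<le> 4"
  using card_ins_le[of "{b, c, d}" a] card3[of b c d] by simp

lemma pick1:
  assumes "finite B" "card B < n" shows "\<exists>x<n. x \<notin> B"
  using ex_out[of B "{..<n}"] assms by auto

lemma four_zero:
  assumes "a < n" "b < n" "c < n" "d < n" "a \<noteq> b" "c \<noteq> d" "a \<noteq> c" "a \<noteq> d" "b \<noteq> c" "b \<noteq> d"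
    "F {a, b} = 0"
  shows "F {a, b, c, d} = 0"
proof -
  define Z where "Z = U - {a, b, c, d}"
  have ZU: "Z \<subseteq> U" unfolding Z_def by auto
  have c4: "card {a, b, c, d} = 4" using assms by simp
  have cZ: "card Z = n - 4" unfolding Z_def using assms c4 by (simp add: card_Diff_subset)
  have "F Z \<noteq> 0"
  proof
    assume "F Z = 0"
    moreover have "2 \<le> card Z" "card Z + 4 \<le> n" using cZ n7 by simp_all
    moreover have "a \<notin> Z" "b \<notin> Z" unfolding Z_def by auto
    ultimately have "F {a, b} = 1" using outside_good[OF ZU _ _ _ assms(1,2)] assms(5) by blast
    then show False using assms by simp
  qed
  then have FZ: "F Z = 1" using F01[of Z] by auto
  have "F Z + F (U - Z) = 1" using C[OF ZU] cZ n7 by simp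
  moreover have "U - Z = {a, b, c, d}" unfolding Z_def using assms by auto
  ultimately show ?thesis using FZ by simp
qed

lemma star_exists: "\<exists>i0<n. \<forall>x<n. x \<noteq> i0 \<longrightarrow> F {i0, x} = 0"
proof -
  obtain a b where ab: "a < n" "b < n" "a \<noteq> b" "F {a, b} = 0" using exists_bad by blast
  have ba: "F {b, a} = 0" using ab by (simp add: insert_commute)
  show ?thesis
  proof (cases "\<exists>c<n. c \<noteq> a \<and> c \<noteq> b \<and> F {a, c} = 1")
    case True
    then obtain c where c: "c < n" "c \<noteq> a" "c \<noteq> b" "F {a, c} = 1" by blast
    have hb: "F {b, d} = 0" if d: "d < n" "d \<noteq> a" "d \<noteq> b" "d \<noteq> c" for d
    proof -
      have "F (insert b (insert d {a, c})) = F {b, d}"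
        by (rule S1') (use ab c d n7 in auto)
      moreover have "insert b (insert d {a, c}) = {a, b, c, d}" by auto
      moreover have "F {a, b, c, d} = 0" by (rule four_zero) (use ab c d in auto)
      ultimately show ?thesis by simp
    qed
    have bc: "F {b, c} = 0"
    proof (rule ccontr)
      assume "F {b, c} \<noteq> 0"
      then have bc1: "F {b, c} = 1" using F01[of "{b, c}"] by auto
      have ha: "F {a, d} = 0" if d: "d < n" "d \<noteq> a" "d \<noteq> b" "d \<noteq> c" for d
      proof -
        have "F (insert a (insert d {b, c})) = F {a, d}"
          by (rule S1') (use ab c d bc1 n7 in auto)
        moreover have "insert a (insert d {b, c}) = {b, a, c, d}" by auto
        moreover have "F {b, a, c, d} = 0" by (rule four_zero) (use ab c d ba in auto)
        ultimately show ?thesis by simp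
      qed
      obtain d1 where d1: "d1 < n" "d1 \<notin> {a, b, c}" using pick1[of "{a, b, c}"] card3[of a b c] n7 by auto
      obtain d2 where d2: "d2 < n" "d2 \<notin> {a, b, c, d1}" using pick1[of "{a, b, c, d1}"] card4[of a b c d1] n7 by auto
      have "F {a, d1} = 0" using ha d1 by auto
      moreover have "F {b, d2} = 0" using hb d2 by auto
      ultimately show False using no_disjoint_bad[of a d1 b d2] ab d1 d2 by auto
    qed
    have "\<forall>x<n. x \<noteq> b \<longrightarrow> F {b, x} = 0"
    proof (intro allI impI)
      fix x assume x: "x < n" "x \<noteq> b"
      show "F {b, x} = 0"
      proof (cases "x = a")
        case True then show ?thesis using ba by simp
      next
        case xa: False
        show ?thesis
        proof (cases "x = c")
          case True then show ?thesis using bc by simp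
        next
          case False then show ?thesis using hb x xa by blast
        qed
      qed
    qed
    then show ?thesis using ab by blast
  next
    case False
    have "\<forall>x<n. x \<noteq> a \<longrightarrow> F {a, x} = 0"
    proof (intro allI impI)
      fix x assume x: "x < n" "x \<noteq> a"
      show "F {a, x} = 0"
      proof (cases "x = b")
        case True then show ?thesis using ab by simp
      next
        case False then show ?thesis using \<open>\<not> (\<exists>c<n. c \<noteq> a \<and> c \<noteq> b \<and> F {a, c} = 1)\<close> x F01 by blast
      qed
    qed
    then show ?thesis using ab by blast
  qed
qed

lemma others_good:
  assumes i0: "i0 < n" "\<forall>x<n. x \<noteq> i0 \<longrightarrow> F {i0, x} = 0"
    and xy: "x < n" "y < n" "x \<noteq> y" "x \<noteq> i0" "y \<noteq> i0"
  shows "F {x, y} = 1"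
proof (rule ccontr)
  assume "F {x, y} \<noteq> 1"
  then have b: "F {x, y} = 0" using F01[of "{x, y}"] by auto
  obtain z where z: "z < n" "z \<notin> {x, y, i0}" using pick1[of "{x, y, i0}"] card3[of x y i0] n7 by auto
  have "F {i0, z} = 0" using i0 z by auto
  then show False using no_disjoint_bad[of x y i0 z] b xy z i0 by auto
qed

lemma F_analysis: "\<exists>i0<n. \<forall>X. X \<subseteq> U \<longrightarrow> 2 \<le> card X \<longrightarrow> card X + 2 \<le> n \<longrightarrow> F X = (if i0 \<in> X then 0 else 1)"
proof -
  obtain i0 where i0: "i0 < n" "\<forall>x<n. x \<noteq> i0 \<longrightarrow> F {i0, x} = 0" using star_exists by blast
  have D1: "F X = 1" if X: "X \<subseteq> U" "i0 \<notin> X" "2 \<le> card X" "card X + 4 \<le> n" for X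
  proof (rule ccontr)
    assume "F X \<noteq> 1"
    then have FX: "F X = 0" using F01[of X] by auto
    have finX: "finite X" using X(1) finite_subset by blast
    obtain z where z: "z < n" "z \<notin> insert i0 X"
      using pick1[of "insert i0 X"] finX X card_ins_le[of X i0] by auto
    have "F {i0, z} = 1" using outside_good[OF X(1) X(3) X(4) FX i0(1) z(1)] X(2) z by auto
    moreover have "F {i0, z} = 0" using i0 z by auto
    ultimately show False by simp
  qed
  have D2: "F Y = 0" if Y: "Y \<subseteq> U" "i0 \<in> Y" "card Y = 3" for Y
  proof (rule ccontr)
    assume "F Y \<noteq> 0"
    then have FY: "F Y = 1" using F01[of Y] by auto
    have finY: "finite Y" using Y(1) finite_subset by blast
    obtain a where a: "a < n" "a \<notin> Y" using pick1[of Y] finY Y n7 by auto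
    obtain b where b: "b < n" "b \<notin> insert a Y" using pick1[of "insert a Y"] finY Y n7 card_ins_le[of Y a] by auto
    have e1: "F (insert a (insert b Y)) = F {a, b}"
      by (rule S1') (use Y a b FY n7 in auto)
    have ab1: "F {a, b} = 1" using others_good[OF i0, of a b] a b Y by auto
    define W where "W = U - insert a (insert b Y)"
    have WU: "W \<subseteq> U" unfolding W_def by auto
    have cab: "card (insert a (insert b Y)) = 5" using a b Y finY by simp
    have sub: "insert a (insert b Y) \<subseteq> U" using a b Y by auto
    have cW: "card W = n - 5" unfolding W_def using card_Diff_subset[of "insert a (insert b Y)" U] sub finY cab by simp
    have FW: "F W = 1" by (rule D1) (use WU cW n7 Y in \<open>auto simp: W_def\<close>)
    have "F W + F (U - W) = 1" using C[OF WU] cW n7 by simp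
    moreover have "U - W = insert a (insert b Y)" unfolding W_def using sub by auto
    ultimately have "F (insert a (insert b Y)) = 0" using FW by simp
    then show False using e1 ab1 by simp
  qed
  have D3: "F X = 1" if X: "X \<subseteq> U" "i0 \<notin> X" "2 \<le> card X" "card X + 2 \<le> n" for X
  proof (cases "card X + 4 \<le> n")
    case True then show ?thesis using D1 X by blast
  next
    case False
    define Y where "Y = U - X"
    have YU: "Y \<subseteq> U" unfolding Y_def by auto
    have cY: "card Y = n - card X" unfolding Y_def using X(1) by (rule card_compl)
    have iY: "i0 \<in> Y" unfolding Y_def using i0 X by auto
    have FY: "F Y = 0"
    proof (cases "card Y = 2")
      case True
      then obtain u v where uv: "Y = {u, v}" "u \<noteq> v" by (auto simp: card_2_iff)
      then have "Y = {i0, if u = i0 then v else u}" using iY by auto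
      moreover have "(if u = i0 then v else u) < n" "(if u = i0 then v else u) \<noteq> i0" using uv YU iY by auto
      ultimately show ?thesis using i0 by metis
    next
      case False
      then have "card Y = 3" using cY X(4) \<open>\<not> card X + 4 \<le> n\<close> by simp
      then show ?thesis using D2 YU iY by blast
    qed
    have "F X + F (U - X) = 1" using C X by blast
    then show ?thesis using FY unfolding Y_def by simp
  qed
  have D4: "F X = 0" if X: "X \<subseteq> U" "i0 \<in> X" "2 \<le> card X" "card X + 2 \<le> n" for X
  proof -
    have cc: "card (U - X) = n - card X" using X(1) by (rule card_compl)
    have "F (U - X) = 1" by (rule D3) (use X cc in auto)
    moreover have "F X + F (U - X) = 1" using C X by blast
    ultimately show ?thesis by simp
  qed
  show ?thesis using D3 D4 i0(1) by (intro exI[of _ i0]) auto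
qed

end




lemma perm_avoid:
  fixes X :: "nat set" and B :: "nat \<Rightarrow> nat set" and b :: nat
  assumes fin: "finite X"
    and rowb: "\<forall>x\<in>X. card (X \<inter> B x) \<le> b"
    and colb: "\<forall>y\<in>X. card {x\<in>X. y \<in> B x} \<le> b"
    and big: "2 * b \<le> card X"
  shows "\<exists>\<sigma>. \<sigma> permutes X \<and> (\<forall>x\<in>X. \<sigma> x \<notin> B x)"
proof -
  define A where "A = (\<lambda>x. X - B x)"
  have cA: "card (A x) \<ge> card X - b" if x: "x \<in> X" for x
  proof -
    have "card (A x) = card X - card (X \<inter> B x)" unfolding A_def using fin by (simp add: card_Diff_subset_Int)
    moreover have "card (X \<inter> B x) \<le> b" using rowb x by blast
    ultimately show ?thesis by linarith
  qed
  have hall: "\<forall>J\<subseteq>X. card J \<le> card (\<Union>(A ` J))"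
  proof (intro allI impI)
    fix J assume J: "J \<subseteq> X"
    have finJ: "finite J" using J fin finite_subset by blast
    have finN: "finite (\<Union>(A ` J))" unfolding A_def using finJ fin by auto
    show "card J \<le> card (\<Union>(A ` J))"
    proof (cases "J = {}")
      case True then show ?thesis by simp
    next
      case Jne: False
      show ?thesis
      proof (cases "card J \<le> card X - b")
        case True
        obtain x where x: "x \<in> J" using Jne by auto
        have "A x \<subseteq> \<Union>(A ` J)" using x by auto
        then have "card (A x) \<le> card (\<Union>(A ` J))" using finN by (rule card_mono[rotated])
        moreover have "card (A x) \<ge> card X - b" using cA x J by auto
        ultimately show ?thesis using True by linarith
      next
        case False
        have "X \<subseteq> \<Union>(A ` J)"
        proof
          fix y assume y: "y \<in> X"
          have "card {x\<in>X. y \<in> B x} < card J" using colb y False big by fastforce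
          then obtain x where x: "x \<in> J" "x \<notin> {x\<in>X. y \<in> B x}" using ex_out[of "{x\<in>X. y \<in> B x}" J] fin by auto
          then have "y \<in> A x" using J y unfolding A_def by auto
          then show "y \<in> \<Union>(A ` J)" using x by auto
        qed
        then have "card X \<le> card (\<Union>(A ` J))" using finN by (rule card_mono[rotated])
        moreover have "card J \<le> card X" using J fin by (rule card_mono[rotated])
        ultimately show ?thesis by linarith
      qed
    qed
  qed
  have finAll: "\<forall>i\<in>X. finite (A i)" unfolding A_def using fin by auto
  obtain f where f: "inj_on f X" "\<forall>i\<in>X. f i \<in> A i"
    using hall_theorem[OF fin finAll hall] by auto
  define \<sigma> where "\<sigma> = (\<lambda>x. if x \<in> X then f x else x)"
  have "\<sigma> permutes X"
  proof (rule inj_imp_permutes)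
    show "inj_on \<sigma> X" using f(1) unfolding \<sigma>_def inj_on_def by auto
    show "\<And>x. x \<in> X \<Longrightarrow> \<sigma> x \<in> X" using f(2) unfolding \<sigma>_def A_def by auto
    show "\<And>i. i \<notin> X \<Longrightarrow> \<sigma> i = i" unfolding \<sigma>_def by auto
  qed (rule fin)
  moreover have "\<forall>x\<in>X. \<sigma> x \<notin> B x" using f(2) unfolding \<sigma>_def A_def by auto
  ultimately show ?thesis by blast
qed

definition der :: "nat \<Rightarrow> nat set \<Rightarrow> (nat \<Rightarrow> nat) set" where
  "der n X = {\<sigma> \<in> perms n. \<forall>x<n. \<sigma> x \<noteq> x \<longleftrightarrow> x \<in> X}"

lemma der_nonempty:
  assumes X: "X \<subseteq> {..<n}" and c: "2 \<le> card X"
  shows "\<exists>\<sigma>. \<sigma> \<in> der n X"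
proof -
  have fin: "finite X" using X finite_subset by blast
  have "\<exists>\<sigma>. \<sigma> permutes X \<and> (\<forall>x\<in>X. \<sigma> x \<notin> {x})"
  proof (rule perm_avoid[OF fin, of _ 1])
    show "\<forall>x\<in>X. card (X \<inter> {x}) \<le> 1" by (simp add: card_le_Suc0_iff_eq)
    show "\<forall>y\<in>X. card {x\<in>X. y \<in> {x}} \<le> 1"
    proof
      fix y assume "y \<in> X"
      have "{x\<in>X. y \<in> {x}} \<subseteq> {y}" by auto
      then show "card {x\<in>X. y \<in> {x}} \<le> 1" using card_mono[of "{y}"] by fastforce
    qed
    show "2 * 1 \<le> card X" using c by simp
  qed
  then obtain \<sigma> where s: "\<sigma> permutes X" "\<forall>x\<in>X. \<sigma> x \<noteq> x" by auto
  have "\<sigma> permutes {..<n}" using permutes_subset[OF s(1) X] .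
  then have "\<sigma> \<in> perms n" unfolding perms_def by simp
  moreover have "\<forall>x<n. \<sigma> x \<noteq> x \<longleftrightarrow> x \<in> X" using s permutes_not_in[OF s(1)] by blast
  ultimately show ?thesis unfolding der_def by blast
qed

lemma der_perms: "\<sigma> \<in> der n X \<Longrightarrow> \<sigma> \<in> perms n"
  unfolding der_def by simp

lemma der_move: "\<sigma> \<in> der n X \<Longrightarrow> x < n \<Longrightarrow> \<sigma> x \<noteq> x \<longleftrightarrow> x \<in> X"
  unfolding der_def by blast

lemma der_fix: "\<sigma> \<in> der n X \<Longrightarrow> x \<notin> X \<Longrightarrow> \<sigma> x = x"
  using der_move[of \<sigma> n X x] perms_out[of \<sigma> n x] der_perms[of \<sigma> n X] by (cases "x < n") auto

lemma der_maps:
  assumes s: "\<sigma> \<in> der n X" and X: "X \<subseteq> {..<n}" and x: "x \<in> X"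
  shows "\<sigma> x \<in> X"
proof (rule ccontr)
  assume "\<sigma> x \<notin> X"
  then have "\<sigma> (\<sigma> x) = \<sigma> x" using der_fix[OF s] by blast
  then have "\<sigma> x = x" using perms_inj[OF der_perms[OF s]] by blast
  moreover have "\<sigma> x \<noteq> x" using der_move[OF s] x X by auto
  ultimately show False by simp
qed

lemma Rg:
  assumes ind: "perm_independent n S" and cS: "card S = fact (n - 1)" and n: "n \<ge> 2"
    and g: "g \<in> perms n" and AU: "A \<subseteq> {..<n}"
    and s: "\<sigma> \<in> der n A" and t: "\<tau> \<in> der n ({..<n} - A)"
  shows "ind S g + ind S (g \<circ> \<sigma> \<circ> \<tau>) = ind S (g \<circ> \<sigma>) + ind S (g \<circ> \<tau>)"
proof (rule trade[OF ind cS n g])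
  have sP: "\<sigma> \<in> perms n" and tP: "\<tau> \<in> perms n" using s t by (simp_all add: der_perms)
  show "g \<circ> \<sigma> \<circ> \<tau> \<in> perms n" using g sP tP by (simp add: perms_compose)
  show "g \<circ> \<sigma> \<in> perms n" using g sP by (simp add: perms_compose)
  show "g \<circ> \<tau> \<in> perms n" using g tP by (simp add: perms_compose)
  have inA: "\<tau> i = i" "\<sigma> i \<noteq> i" if "i \<in> A" for i
    using der_fix[OF t, of i] der_move[OF s, of i] that AU by auto
  have outA: "\<tau> i \<notin> A" "\<tau> i \<noteq> i" "\<sigma> (\<tau> i) = \<tau> i" "\<sigma> i = i" if "i < n" "i \<notin> A" for i
  proof -
    have "\<tau> i \<in> {..<n} - A" using der_maps[OF t _, of i] that by auto
    then show "\<tau> i \<notin> A" by simp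
    then show "\<sigma> (\<tau> i) = \<tau> i" using der_fix[OF s] by blast
    show "\<tau> i \<noteq> i" using der_move[OF t, of i] that by auto
    show "\<sigma> i = i" using der_fix[OF s] that by blast
  qed
  show "perm_adj n g (g \<circ> \<sigma> \<circ> \<tau>)" unfolding perm_adj_def
  proof (intro allI impI)
    fix i assume i: "i < n"
    have "\<sigma> (\<tau> i) \<noteq> i"
    proof (cases "i \<in> A")
      case True then show ?thesis using inA by simp
    next
      case False then show ?thesis using outA i by simp
    qed
    then show "g i \<noteq> (g \<circ> \<sigma> \<circ> \<tau>) i" using perms_inj[OF g] by simp
  qed
  show "\<forall>i<n. ((g \<circ> \<sigma>) i = g i \<and> (g \<circ> \<tau>) i = (g \<circ> \<sigma> \<circ> \<tau>) i) \<or>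
              ((g \<circ> \<sigma>) i = (g \<circ> \<sigma> \<circ> \<tau>) i \<and> (g \<circ> \<tau>) i = g i)"
  proof (intro allI impI)
    fix i assume i: "i < n"
    show "((g \<circ> \<sigma>) i = g i \<and> (g \<circ> \<tau>) i = (g \<circ> \<sigma> \<circ> \<tau>) i) \<or>
              ((g \<circ> \<sigma>) i = (g \<circ> \<sigma> \<circ> \<tau>) i \<and> (g \<circ> \<tau>) i = g i)"
    proof (cases "i \<in> A")
      case True then show ?thesis using inA by simp
    next
      case False then show ?thesis using outA i by simp
    qed
  qed
qed




lemma card_fix_gen:
  assumes fin: "finite A" and a: "a \<in> A" and b: "b \<in> A"
  shows "card {q. q permutes A \<and> q a = b \<and> P (transpose a b \<circ> q)} = card {r. r permutes (A - {a}) \<and> P r}"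
proof -
  define t where "t = transpose a b"
  have tt: "t \<circ> t = id" unfolding t_def by simp
  have tA: "t permutes A" unfolding t_def using a b by (rule permutes_swap_id)
  have eqset: "{r. r permutes (A - {a}) \<and> P r} = {r. r permutes A \<and> r a = a \<and> P r}"
  proof (rule set_eqI, rule iffI)
    fix r assume "r \<in> {r. r permutes (A - {a}) \<and> P r}"
    then have r: "r permutes (A - {a})" "P r" by auto
    have "r permutes A" using permutes_subset[OF r(1)] by auto
    moreover have "r a = a" using permutes_not_in[OF r(1)] by auto
    ultimately show "r \<in> {r. r permutes A \<and> r a = a \<and> P r}" using r by auto
  next
    fix r assume "r \<in> {r. r permutes A \<and> r a = a \<and> P r}"
    then have r: "r permutes A" "r a = a" "P r" by auto
    have "r permutes (A - {a})" by (rule permutes_superset[OF r(1)]) (use r(2) in auto)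
    then show "r \<in> {r. r permutes (A - {a}) \<and> P r}" using r by auto
  qed
  have "bij_betw (\<lambda>q. t \<circ> q) {q. q permutes A \<and> q a = b \<and> P (t \<circ> q)} {r. r permutes A \<and> r a = a \<and> P r}"
  proof (rule bij_betw_imageI)
    show "inj_on (\<lambda>q. t \<circ> q) {q. q permutes A \<and> q a = b \<and> P (t \<circ> q)}"
    proof (rule inj_onI)
      fix x y assume "t \<circ> x = t \<circ> y"
      then have "t \<circ> (t \<circ> x) = t \<circ> (t \<circ> y)" by simp
      then show "x = y" by (simp add: comp_assoc[symmetric] tt)
    qed
    show "(\<lambda>q. t \<circ> q) ` {q. q permutes A \<and> q a = b \<and> P (t \<circ> q)} = {r. r permutes A \<and> r a = a \<and> P r}"
    proof (rule set_eqI, rule iffI)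
      fix r assume "r \<in> (\<lambda>q. t \<circ> q) ` {q. q permutes A \<and> q a = b \<and> P (t \<circ> q)}"
      then obtain q where q: "q permutes A" "q a = b" "P (t \<circ> q)" "r = t \<circ> q" by auto
      have "r permutes A" using q(1,4) tA by (simp add: permutes_compose)
      moreover have "r a = a" using q unfolding t_def by simp
      ultimately show "r \<in> {r. r permutes A \<and> r a = a \<and> P r}" using q by auto
    next
      fix r assume "r \<in> {r. r permutes A \<and> r a = a \<and> P r}"
      then have r: "r permutes A" "r a = a" "P r" by auto
      define q where "q = t \<circ> r"
      have "q permutes A" unfolding q_def using r(1) tA by (simp add: permutes_compose)
      moreover have "q a = b" unfolding q_def t_def using r(2) by simp
      moreover have "t \<circ> q = r" unfolding q_def by (simp add: comp_assoc[symmetric] tt)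
      ultimately show "r \<in> (\<lambda>q. t \<circ> q) ` {q. q permutes A \<and> q a = b \<and> P (t \<circ> q)}"
        using r(3) by (intro image_eqI[of _ _ q]) auto
    qed
  qed
  then have "card {q. q permutes A \<and> q a = b \<and> P (t \<circ> q)} = card {r. r permutes A \<and> r a = a \<and> P r}"
    by (rule bij_betw_same_card)
  then show ?thesis unfolding eqset t_def .
qed

lemma card_perms_fix1:
  assumes "a < n" "b < n"
  shows "card {q\<in>perms n. q a = b} = fact (n - 1)"
proof -
  have "card {q\<in>perms n. q a = b} = card {q. q permutes {..<n} \<and> q a = b \<and> True}"
    unfolding perms_def by simp
  also have "\<dots> = card {r. r permutes ({..<n} - {a}) \<and> True}"
    using card_fix_gen[of "{..<n}" a b "\<lambda>_. True"] assms by simp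
  also have "\<dots> = fact (n - 1)" using assms by (simp add: card_permutations)
  finally show ?thesis .
qed

lemma card_perms_fix2:
  assumes "i < n" "j < n" "k < n" "l < n" "i \<noteq> k" "j \<noteq> l"
  shows "card {q\<in>perms n. q i = j \<and> q k = l} = fact (n - 2)"
proof -
  define l' where "l' = transpose i j l"
  have l'1: "l' \<noteq> i" unfolding l'_def using assms by (auto simp: transpose_eq_iff)
  have l'2: "l' < n" unfolding l'_def using assms by (auto simp: transpose_def)
  have e: "\<And>q. q k = l \<longleftrightarrow> (transpose i j \<circ> q) k = l'"
    unfolding l'_def by (auto dest: transpose_eq_imp_eq)
  have "card {q\<in>perms n. q i = j \<and> q k = l} = card {q. q permutes {..<n} \<and> q i = j \<and> (\<lambda>r. r k = l') (transpose i j \<circ> q)}"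
    unfolding perms_def using e by simp
  also have "\<dots> = card {r. r permutes ({..<n} - {i}) \<and> r k = l'}"
    using card_fix_gen[of "{..<n}" i j "\<lambda>r. r k = l'"] assms by simp
  also have "\<dots> = card {r. r permutes ({..<n} - {i}) \<and> r k = l' \<and> True}" by simp
  also have "\<dots> = card {r. r permutes ({..<n} - {i} - {k}) \<and> True}"
    using card_fix_gen[of "{..<n} - {i}" k l' "\<lambda>_. True"] assms l'1 l'2 by simp
  also have "\<dots> = fact (n - 2)"
  proof -
    have "card ({..<n} - {i} - {k}) = n - 2" using assms by (simp add: card_Diff_subset)
    then show ?thesis by (simp add: card_permutations)
  qed
  finally show ?thesis .
qed




lemma comp_full:
  assumes AU: "A \<subseteq> {..<n}" and s: "\<sigma> \<in> der n A" and t: "\<tau> \<in> der n ({..<n} - A)" and i: "i < n"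
  shows "\<sigma> (\<tau> i) \<noteq> i" "\<sigma> (\<tau> i) \<in> A \<longleftrightarrow> i \<in> A"
proof -
  have "\<sigma> (\<tau> i) \<noteq> i \<and> (\<sigma> (\<tau> i) \<in> A \<longleftrightarrow> i \<in> A)"
  proof (cases "i \<in> A")
    case True
    have "\<tau> i = i" using der_fix[OF t, of i] True by auto
    moreover have "\<sigma> i \<noteq> i" using der_move[OF s, of i] True AU by auto
    moreover have "\<sigma> i \<in> A" using der_maps[OF s AU True] .
    ultimately show ?thesis using True by simp
  next
    case False
    have "\<tau> i \<in> {..<n} - A" using der_maps[OF t _, of i] False i by auto
    moreover have "\<tau> i \<noteq> i" using der_move[OF t, of i] False i by auto
    ultimately show ?thesis using der_fix[OF s, of "\<tau> i"] False by auto
  qed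
  then show "\<sigma> (\<tau> i) \<noteq> i" "\<sigma> (\<tau> i) \<in> A \<longleftrightarrow> i \<in> A" by auto
qed

locale idS =
  fixes n :: nat and S :: "(nat \<Rightarrow> nat) set"
  assumes n7: "n \<ge> 7" and indep: "perm_independent n S" and cS: "card S = fact (n - 1)"
    and idS: "id \<in> S"
begin

abbreviation "U \<equiv> {..<n}"

definition good :: "nat set \<Rightarrow> bool" where
  "good X \<longleftrightarrow> X \<subseteq> U \<and> 2 \<le> card X \<and> card X + 2 \<le> n"

definition Fv :: "nat set \<Rightarrow> nat" where
  "Fv X = ind S (SOME \<sigma>. \<sigma> \<in> der n X)"

lemma SP: "S \<subseteq> perms n" using indep unfolding perm_independent_def by auto

lemma n2: "n \<ge> 2" using n7 by simp

lemma full_der_notin: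
  assumes d: "d \<in> perms n" and nf: "\<forall>i<n. d i \<noteq> i"
  shows "d \<notin> S"
proof
  assume dS: "d \<in> S"
  have adj: "perm_adj n id d" using nf unfolding perm_adj_def by (simp add: eq_commute)
  have "d 0 \<noteq> 0" using nf n7 by simp
  then have "id \<noteq> d" by auto
  then show False using indep idS dS adj unfolding perm_independent_def by blast
qed

lemma good_compl: "good X \<Longrightarrow> good (U - X)"
  unfolding good_def using card_compl[of X n] by auto

lemma good_ex: "good X \<Longrightarrow> (SOME \<sigma>. \<sigma> \<in> der n X) \<in> der n X"
  unfolding good_def using der_nonempty[of X n] by (metis someI_ex)

lemma sum1:
  assumes X: "good X" and s: "\<sigma> \<in> der n X" and t: "\<tau> \<in> der n (U - X)"
  shows "ind S \<sigma> + ind S \<tau> = 1"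
proof -
  have XU: "X \<subseteq> U" using X unfolding good_def by auto
  have e: "ind S id + ind S (id \<circ> \<sigma> \<circ> \<tau>) = ind S (id \<circ> \<sigma>) + ind S (id \<circ> \<tau>)"
    by (rule Rg[OF indep cS n2 perms_id XU s t])
  have "\<sigma> \<circ> \<tau> \<notin> S"
  proof (rule full_der_notin)
    show "\<sigma> \<circ> \<tau> \<in> perms n" using s t by (simp add: der_perms perms_compose)
    show "\<forall>i<n. (\<sigma> \<circ> \<tau>) i \<noteq> i" using comp_full(1)[OF XU s t] by simp
  qed
  then show ?thesis using e idS unfolding ind_def by simp
qed

lemma Fv_eq:
  assumes X: "good X" and s: "\<sigma> \<in> der n X"
  shows "ind S \<sigma> = Fv X"
proof -
  define \<tau> where "\<tau> = (SOME \<sigma>. \<sigma> \<in> der n (U - X))"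
  have t: "\<tau> \<in> der n (U - X)" unfolding \<tau>_def by (rule good_ex[OF good_compl[OF X]])
  have "ind S \<sigma> + ind S \<tau> = 1" by (rule sum1[OF X s t])
  moreover have "ind S (SOME \<sigma>. \<sigma> \<in> der n X) + ind S \<tau> = 1" by (rule sum1[OF X good_ex[OF X] t])
  ultimately show ?thesis unfolding Fv_def by simp
qed

lemma FC: "good X \<Longrightarrow> Fv X + Fv (U - X) = 1"
  unfolding Fv_def using sum1 good_ex good_compl by blast

lemma Fbin: "Fv X \<le> 1" unfolding Fv_def ind_def by simp

lemma FR:
  assumes BU: "B \<subseteq> U" and cB: "2 \<le> card B" "card B + 4 \<le> n" and a: "a < n" and b: "b < n"
    and aB: "a \<notin> B" and bB: "b \<notin> B" and ab: "a \<noteq> b"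
  shows "Fv {a, b} + Fv B = Fv (insert a (insert b B)) + 1"
proof -
  have finB: "finite B" using BU finite_subset by blast
  define A where "A = insert a B"
  define Ac where "Ac = U - A"
  have AU: "A \<subseteq> U" unfolding A_def using BU a by auto
  have cA: "card A = card B + 1" unfolding A_def using aB finB by simp
  have cAc: "card Ac = n - card B - 1" unfolding Ac_def using card_compl[OF AU] cA by simp
  have c2A: "2 \<le> card A" using cA cB by simp
  have c2Ac: "2 \<le> card Ac" using cAc cB by simp
  have AcU: "Ac \<subseteq> U" unfolding Ac_def by auto
  obtain \<sigma> where s: "\<sigma> \<in> der n A" using der_nonempty[OF AU c2A] by blast
  obtain \<tau> where t: "\<tau> \<in> der n Ac" using der_nonempty[OF AcU c2Ac] by blast
  define t where "t = transpose a b"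
  have tP: "t \<in> perms n" unfolding t_def perms_def using a b by (simp add: permutes_swap_id)
  have aA: "a \<in> A" and bA: "b \<notin> A" unfolding A_def using bB ab by auto
  have e: "ind S t + ind S (t \<circ> \<sigma> \<circ> \<tau>) = ind S (t \<circ> \<sigma>) + ind S (t \<circ> \<tau>)"
    by (rule Rg[OF indep cS n2 tP AU s]) (use t in \<open>simp add: Ac_def\<close>)
  have t1: "ind S t = Fv {a, b}"
  proof (rule Fv_eq)
    show "good {a, b}" unfolding good_def using a b ab n7 by auto
    show "t \<in> der n {a, b}" unfolding der_def t_def using tP[unfolded t_def] ab
      by (auto simp: transpose_def)
  qed
  have t2: "ind S (t \<circ> \<sigma> \<circ> \<tau>) = 0"
  proof -
    have "t \<circ> \<sigma> \<circ> \<tau> \<notin> S"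
    proof (rule full_der_notin)
      show "t \<circ> \<sigma> \<circ> \<tau> \<in> perms n" using tP s t by (simp add: der_perms perms_compose)
      show "\<forall>i<n. (t \<circ> \<sigma> \<circ> \<tau>) i \<noteq> i"
      proof (intro allI impI)
        fix i assume i: "i < n"
        have t': "\<tau> \<in> der n (U - A)" using t unfolding Ac_def .
        have y1: "\<sigma> (\<tau> i) \<noteq> i" and y2: "\<sigma> (\<tau> i) \<in> A \<longleftrightarrow> i \<in> A"
          using comp_full[OF AU s t' i] by auto
        show "(t \<circ> \<sigma> \<circ> \<tau>) i \<noteq> i"
          unfolding t_def using y1 y2 aA bA by (auto simp: transpose_eq_iff)
      qed
    qed
    then show ?thesis unfolding ind_def by simp
  qed
  have t3: "ind S (t \<circ> \<sigma>) = Fv (insert a (insert b B))"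
  proof (rule Fv_eq)
    show "good (insert a (insert b B))" unfolding good_def using BU a b aB bB ab finB cB by auto
    have "t \<circ> \<sigma> \<in> perms n" using tP s by (simp add: der_perms perms_compose)
    moreover have "\<forall>x<n. (t \<circ> \<sigma>) x \<noteq> x \<longleftrightarrow> x \<in> insert a (insert b B)"
    proof (intro allI impI)
      fix x assume x: "x < n"
      show "(t \<circ> \<sigma>) x \<noteq> x \<longleftrightarrow> x \<in> insert a (insert b B)"
      proof (cases "x \<in> A")
        case True
        have "\<sigma> x \<in> A" "\<sigma> x \<noteq> x" using der_maps[OF s AU True] der_move[OF s x] True by auto
        then show ?thesis unfolding t_def using True aA bA by (auto simp: transpose_eq_iff A_def)
      next
        case False
        have "\<sigma> x = x" using der_fix[OF s False] .
        then show ?thesis unfolding t_def using False aA ab by (auto simp: transpose_eq_iff A_def)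
      qed
    qed
    ultimately show "t \<circ> \<sigma> \<in> der n (insert a (insert b B))" unfolding der_def by blast
  qed
  have gI: "good (insert a Ac)"
  proof -
    have "a \<notin> Ac" unfolding Ac_def using aA by auto
    then have "card (insert a Ac) = n - card B" using cAc finite_subset[of Ac U] cB unfolding Ac_def by auto
    then show ?thesis unfolding good_def Ac_def using a cB by auto
  qed
  have t4: "ind S (t \<circ> \<tau>) = Fv (insert a Ac)"
  proof (rule Fv_eq[OF gI])
    have "t \<circ> \<tau> \<in> perms n" using tP t by (simp add: der_perms perms_compose)
    moreover have "\<forall>x<n. (t \<circ> \<tau>) x \<noteq> x \<longleftrightarrow> x \<in> insert a Ac"
    proof (intro allI impI)
      fix x assume x: "x < n"
      show "(t \<circ> \<tau>) x \<noteq> x \<longleftrightarrow> x \<in> insert a Ac"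
      proof (cases "x \<in> Ac")
        case True
        have AcU: "Ac \<subseteq> U" unfolding Ac_def by auto
        have "\<tau> x \<in> Ac" "\<tau> x \<noteq> x" using der_maps[OF t AcU True] der_move[OF t x] True by auto
        then show ?thesis unfolding t_def using True aA bA x by (auto simp: transpose_eq_iff Ac_def)
      next
        case False
        have "\<tau> x = x" using der_fix[OF t False] .
        then show ?thesis unfolding t_def using False aA bA x by (auto simp: transpose_eq_iff Ac_def)
      qed
    qed
    ultimately show "t \<circ> \<tau> \<in> der n (insert a Ac)" unfolding der_def by blast
  qed
  have "Fv (insert a Ac) + Fv (U - insert a Ac) = 1" by (rule FC[OF gI])
  moreover have "U - insert a Ac = B" unfolding Ac_def A_def using BU aB by auto
  ultimately have "Fv (insert a Ac) + Fv B = 1" by simp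
  then show ?thesis using e t1 t2 t3 t4 by simp
qed

lemma FI:
  assumes AU: "A \<subseteq> U" and BU: "B \<subseteq> U" and un: "A \<union> B = U" and it: "A \<inter> B = {x}"
    and gA: "good A" and gB: "good B" and FA: "Fv A = 1" and FB: "Fv B = 1"
  shows False
proof -
  obtain \<sigma> where s: "\<sigma> \<in> der n A" using good_ex[OF gA] by blast
  obtain \<rho> where r: "\<rho> \<in> der n B" using good_ex[OF gB] by blast
  have i1: "ind S \<sigma> = 1" using Fv_eq[OF gA s] FA by simp
  have sS: "\<sigma> \<in> S" using i1 unfolding ind_def by (cases "\<sigma> \<in> S") auto
  have i2: "ind S \<rho> = 1" using Fv_eq[OF gB r] FB by simp
  have rS: "\<rho> \<in> S" using i2 unfolding ind_def by (cases "\<rho> \<in> S") auto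
  have adj: "perm_adj n \<sigma> \<rho>" unfolding perm_adj_def
  proof (intro allI impI)
    fix i assume i: "i < n"
    show "\<sigma> i \<noteq> \<rho> i"
    proof (cases "i = x")
      case True
      have xA: "x \<in> A" and xB: "x \<in> B" using it by auto
      have "\<sigma> x \<in> A" "\<sigma> x \<noteq> x" using der_maps[OF s AU xA] der_move[OF s, of x] xA i True by auto
      moreover have "\<rho> x \<in> B" "\<rho> x \<noteq> x" using der_maps[OF r BU xB] der_move[OF r, of x] xB i True by auto
      ultimately have "\<sigma> x \<noteq> \<rho> x"
      proof (intro notI)
        assume h: "\<sigma> x \<in> A" "\<sigma> x \<noteq> x" "\<rho> x \<in> B" "\<rho> x \<noteq> x" "\<sigma> x = \<rho> x"
        then have "\<sigma> x \<in> A \<inter> B" by simp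
        then show False using it h(2) by simp
      qed
      then show ?thesis using True by simp
    next
      case False
      have "i \<in> A \<union> B" using un i by simp
      moreover have "\<not> (i \<in> A \<and> i \<in> B)" using it False by blast
      ultimately have "(i \<in> A \<and> i \<notin> B) \<or> (i \<in> B \<and> i \<notin> A)" by blast
      then show ?thesis
      proof
        assume "i \<in> A \<and> i \<notin> B"
        then show ?thesis using der_move[OF s, of i] der_fix[OF r, of i] i by auto
      next
        assume "i \<in> B \<and> i \<notin> A"
        then show ?thesis using der_move[OF r, of i] der_fix[OF s, of i] i by auto
      qed
    qed
  qed
  have "\<sigma> 0 \<noteq> \<rho> 0" using adj n7 unfolding perm_adj_def by simp
  then have "\<sigma> \<noteq> \<rho>" by auto
  then show False using indep sS rS adj unfolding perm_independent_def by blast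
qed

lemma Fsys_inst: "Fsys Fv n"
proof (rule Fsys.intro)
  show "7 \<le> n" by (rule n7)
  show "\<And>X. Fv X \<le> 1" by (rule Fbin)
  show "Fv X + Fv (U - X) = 1" if "X \<subseteq> U" "2 \<le> card X" "card X + 2 \<le> n" for X
  proof -
    have "good X" unfolding good_def using that by simp
    then show ?thesis by (rule FC)
  qed
  show "Fv {a, b} + Fv B = Fv (insert a (insert b B)) + 1"
    if "B \<subseteq> U" "2 \<le> card B" "card B + 4 \<le> n" "a < n" "b < n" "a \<notin> B" "b \<notin> B" "a \<noteq> b" for B a b
    by (rule FR[OF that])
  show False if "A \<subseteq> U" "B \<subseteq> U" "A \<union> B = U" "A \<inter> B = {x}"
           "2 \<le> card A" "card A + 2 \<le> n" "2 \<le> card B" "card B + 2 \<le> n"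
           "Fv A = 1" "Fv B = 1" for A B x
  proof -
    have "good A" "good B" unfolding good_def using that by simp_all
    then show False using FI[OF that(1-4) _ _ that(9,10)] by blast
  qed
qed

end




context idS
begin

lemma star: "\<exists>i0<n. S = {p\<in>perms n. p i0 = i0}"
proof -
  obtain i0 where i0: "i0 < n"
    "\<forall>X. X \<subseteq> U \<longrightarrow> 2 \<le> card X \<longrightarrow> card X + 2 \<le> n \<longrightarrow> Fv X = (if i0 \<in> X then 0 else 1)"
    using Fsys.F_analysis[OF Fsys_inst] by blast
  have sub: "S \<subseteq> {p\<in>perms n. p i0 = i0}"
  proof
    fix p assume pS: "p \<in> S"
    have pP: "p \<in> perms n" using pS SP by auto
    show "p \<in> {p\<in>perms n. p i0 = i0}"
    proof (rule ccontr)
      assume "p \<notin> {p\<in>perms n. p i0 = i0}"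
      then have pj: "p i0 \<noteq> i0" using pP by auto
      define j where "j = p i0"
      have j: "j < n" "j \<noteq> i0" using perms_lt[OF pP i0(1)] pj unfolding j_def by auto
      define X where "X = U - {i0, j}"
      have XU: "X \<subseteq> U" unfolding X_def by auto
      have finX: "finite X" unfolding X_def by simp
      have c2: "card {i0, j} = 2" using j by simp
      have cX: "card X = n - 2" unfolding X_def using card_compl[of "{i0, j}" n] c2 i0 j by simp
      have rowb: "\<forall>x\<in>X. card (X \<inter> {x, p x}) \<le> 2"
      proof
        fix x assume "x \<in> X"
        have "card (X \<inter> {x, p x}) \<le> card {x, p x}" by (rule card_mono) auto
        also have "\<dots> \<le> 2" using card_ins_le[of "{p x}" x] by simp
        finally show "card (X \<inter> {x, p x}) \<le> 2" .
      qed
      have colb: "\<forall>y\<in>X. card {x\<in>X. y \<in> {x, p x}} \<le> 2"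
      proof
        fix y assume "y \<in> X"
        have "{x\<in>X. y \<in> {x, p x}} \<subseteq> {y, inv p y}"
        proof
          fix x assume "x \<in> {x\<in>X. y \<in> {x, p x}}"
          then have "y = x \<or> y = p x" by auto
          then show "x \<in> {y, inv p y}" using perms_inv_apply(2)[OF pP, of x] by auto
        qed
        then have "card {x\<in>X. y \<in> {x, p x}} \<le> card {y, inv p y}" by (rule card_mono[rotated]) simp
        also have "\<dots> \<le> 2" using card_ins_le[of "{inv p y}" y] by simp
        finally show "card {x\<in>X. y \<in> {x, p x}} \<le> 2" .
      qed
      have big: "2 * 2 \<le> card X" using cX n7 by simp
      obtain \<sigma> where s: "\<sigma> permutes X" "\<forall>x\<in>X. \<sigma> x \<notin> {x, p x}"
        using perm_avoid[OF finX rowb colb big] by blast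
      have sP: "\<sigma> \<in> perms n" unfolding perms_def using permutes_subset[OF s(1) XU] by simp
      have sD: "\<sigma> \<in> der n X" unfolding der_def
      proof (intro CollectI conjI allI impI sP)
        fix x assume "x < n"
        show "\<sigma> x \<noteq> x \<longleftrightarrow> x \<in> X" using s(2) permutes_not_in[OF s(1), of x] by auto
      qed
      have "2 \<le> card X" "card X + 2 \<le> n" using cX n7 by linarith+
      then have gX: "good X" unfolding good_def using XU by simp
      have "Fv X = 1" using i0(2) XU cX n7 unfolding X_def by simp
      then have "ind S \<sigma> = 1" using Fv_eq[OF gX sD] by simp
      then have sS: "\<sigma> \<in> S" unfolding ind_def by (cases "\<sigma> \<in> S") auto
      have adj: "perm_adj n \<sigma> p" unfolding perm_adj_def
      proof (intro allI impI)
        fix i assume i: "i < n"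
        show "\<sigma> i \<noteq> p i"
        proof (cases "i \<in> X")
          case True then show ?thesis using s(2) by auto
        next
          case False
          then have iij: "i = i0 \<or> i = j" using i unfolding X_def by auto
          have si: "\<sigma> i = i" using permutes_not_in[OF s(1) False] .
          show ?thesis
          proof (cases "i = i0")
            case True then show ?thesis using si pj by simp
          next
            case False
            then have ij: "i = j" using iij by simp
            have "p j \<noteq> j"
            proof
              assume "p j = j"
              then have "p j = p i0" unfolding j_def by simp
              then have "j = i0" using perms_inj[OF pP] by simp
              then show False using j by simp
            qed
            then show ?thesis using si ij by simp
          qed
        qed
      qed
      have "\<sigma> i0 \<noteq> p i0" using adj i0(1) unfolding perm_adj_def by simp
      then have "\<sigma> \<noteq> p" by auto
      then show False using indep sS pS adj unfolding perm_independent_def by blast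
    qed
  qed
  have cT: "card {p\<in>perms n. p i0 = i0} = fact (n - 1)" using card_perms_fix1[OF i0(1) i0(1)] .
  have finT: "finite {p\<in>perms n. p i0 = i0}" using finite_perms by simp
  have "S = {p\<in>perms n. p i0 = i0}" using card_subset_eq[OF finT sub] cT cS by simp
  then show ?thesis using i0(1) by blast
qed

end

lemma star_general:
  assumes n7: "n \<ge> 7" and indep: "perm_independent n S" and cS: "card S = fact (n - 1)"
  shows "\<exists>i j. i < n \<and> j < n \<and> S = {p\<in>perms n. p i = j}"
proof -
  have SP0: "S \<subseteq> perms n" using indep unfolding perm_independent_def by auto
  have "S \<noteq> {}" using cS by auto
  then obtain p0 where p0: "p0 \<in> S" by auto
  have p0P: "p0 \<in> perms n" using p0 SP0 by auto
  have ip0: "inv p0 \<in> perms n" using perms_inv[OF p0P] .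
  have ip0p0: "inv p0 \<circ> p0 = id" using p0P unfolding perms_def by (simp add: permutes_inv_o)
  have p0ip0: "p0 \<circ> inv p0 = id" using p0P unfolding perms_def by (simp add: permutes_inv_o)
  define S' where "S' = (\<lambda>q. inv p0 \<circ> q) ` S"
  have inj: "inj_on (\<lambda>q. inv p0 \<circ> q) S"
  proof (rule inj_onI)
    fix x y assume "inv p0 \<circ> x = inv p0 \<circ> y"
    then have "p0 \<circ> (inv p0 \<circ> x) = p0 \<circ> (inv p0 \<circ> y)" by simp
    then show "x = y" by (simp add: comp_assoc[symmetric] p0ip0)
  qed
  have cS': "card S' = fact (n - 1)" unfolding S'_def using card_image[OF inj] cS by simp
  have indep': "perm_independent n S'" unfolding perm_independent_def
  proof (intro conjI ballI impI)
    show "S' \<subseteq> perms n" unfolding S'_def using SP0 ip0 by (auto intro: perms_compose)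
  next
    fix x y assume x: "x \<in> S'" and y: "y \<in> S'" and xy: "x \<noteq> y"
    obtain a where a: "a \<in> S" "x = inv p0 \<circ> a" using x unfolding S'_def by blast
    obtain b where b: "b \<in> S" "y = inv p0 \<circ> b" using y unfolding S'_def by blast
    have "a \<noteq> b" using a b xy by auto
    then have "\<not> perm_adj n a b" using indep a b unfolding perm_independent_def by blast
    then obtain i where i: "i < n" "a i = b i" unfolding perm_adj_def by auto
    then have "x i = y i" using a b by simp
    then show "\<not> perm_adj n x y" using i unfolding perm_adj_def by auto
  qed
  have idS': "id \<in> S'" unfolding S'_def using p0 ip0p0 by (auto intro: image_eqI[of _ _ p0])
  interpret idS n S' using n7 indep' cS' idS' by unfold_locales
  obtain i0 where i0: "i0 < n" "S' = {p\<in>perms n. p i0 = i0}" using star by blast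
  have sub: "S \<subseteq> {p\<in>perms n. p i0 = p0 i0}"
  proof
    fix q assume q: "q \<in> S"
    have "inv p0 \<circ> q \<in> S'" unfolding S'_def using q by blast
    then have "inv p0 (q i0) = i0" using i0(2) by auto
    then have "p0 (inv p0 (q i0)) = p0 i0" by simp
    then have "q i0 = p0 i0" using perms_inv_apply(1)[OF p0P] by simp
    then show "q \<in> {p\<in>perms n. p i0 = p0 i0}" using q SP0 by auto
  qed
  have j: "p0 i0 < n" using perms_lt[OF p0P i0(1)] .
  have cT: "card {p\<in>perms n. p i0 = p0 i0} = fact (n - 1)" using card_perms_fix1[OF i0(1) j] .
  have finT: "finite {p\<in>perms n. p i0 = p0 i0}" using finite_perms by simp
  have "S = {p\<in>perms n. p i0 = p0 i0}" using card_subset_eq[OF finT sub] cT assms(3) by simp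
  then show ?thesis using i0(1) j by blast
qed




lemma card_filter_sum: "finite A \<Longrightarrow> card {x\<in>A. P x} = (\<Sum>x\<in>A. if P x then 1 else 0 :: nat)"
  by (simp add: sum.If_cases Int_def)

lemma count_N:
  assumes n: "n \<ge> 2" and i: "i < n" and j: "j < n" and pP: "p \<in> perms n"
  defines "T \<equiv> {q\<in>perms n. q i = j}"
  shows "(\<Sum>k\<in>{..<n}. card {q\<in>T. q k = p k}) =
    (if p i = j then fact (n - 1) + (n - 1) * fact (n - 2) else (n - 2) * fact (n - 2))"
proof -
  define c where "c = (\<lambda>k. card {q\<in>T. q k = p k})"
  have cgen: "c k = fact (n - 2)" if k: "k < n" "k \<noteq> i" "p k \<noteq> j" for k
  proof -
    have "{q\<in>T. q k = p k} = {q\<in>perms n. q i = j \<and> q k = p k}" unfolding T_def by auto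
    then show ?thesis unfolding c_def using card_perms_fix2[OF i j k(1) perms_lt[OF pP k(1)]] k by auto
  qed
  have fin: "finite {..<n}" by simp
  show ?thesis
  proof (cases "p i = j")
    case True
    have ci: "c i = fact (n - 1)"
    proof -
      have "{q\<in>T. q i = p i} = T" unfolding T_def using True by auto
      then show ?thesis unfolding c_def T_def using card_perms_fix1[OF i j] by simp
    qed
    have rest: "(\<Sum>k\<in>{..<n} - {i}. c k) = (n - 1) * fact (n - 2)"
    proof -
      have "(\<Sum>k\<in>{..<n} - {i}. c k) = (\<Sum>k\<in>{..<n} - {i}. fact (n - 2))"
      proof (rule sum.cong[OF refl])
        fix k assume k: "k \<in> {..<n} - {i}"
        have "p k \<noteq> j" using k True perms_inj[OF pP, of k i] by auto
        then show "c k = fact (n - 2)" using cgen k by auto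
      qed
      then show ?thesis using i by simp
    qed
    have "(\<Sum>k\<in>{..<n}. c k) = c i + (\<Sum>k\<in>{..<n} - {i}. c k)" using i by (simp add: sum.remove)
    then show ?thesis using ci rest True unfolding c_def by simp
  next
    case False
    define k0 where "k0 = inv p j"
    have pk0: "p k0 = j" unfolding k0_def using perms_inv_apply(1)[OF pP] by simp
    have k0n: "k0 < n" unfolding k0_def using perms_lt[OF perms_inv[OF pP] j] .
    have k0i: "k0 \<noteq> i" using pk0 False by auto
    have ci: "c i = 0"
    proof -
      have e: "{q\<in>T. q i = p i} = {}" unfolding T_def using False by auto
      show ?thesis unfolding c_def by (subst e) simp
    qed
    have ck0: "c k0 = 0"
    proof -
      have "{q\<in>T. q k0 = p k0} = {}"
      proof (rule ccontr)
        assume "{q\<in>T. q k0 = p k0} \<noteq> {}"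
        then obtain q where q: "q \<in> perms n" "q i = j" "q k0 = j" unfolding T_def using pk0 by auto
        then have "k0 = i" using perms_inj[OF q(1), of k0 i] by simp
        then show False using k0i by simp
      qed
      note e = this
      show ?thesis unfolding c_def by (subst e) simp
    qed
    have rest: "(\<Sum>k\<in>{..<n} - {i} - {k0}. c k) = (n - 2) * fact (n - 2)"
    proof -
      have "(\<Sum>k\<in>{..<n} - {i} - {k0}. c k) = (\<Sum>k\<in>{..<n} - {i} - {k0}. fact (n - 2))"
      proof (rule sum.cong[OF refl])
        fix k assume k: "k \<in> {..<n} - {i} - {k0}"
        have "p k \<noteq> j" using k pk0 perms_inj[OF pP, of k k0] by auto
        then show "c k = fact (n - 2)" using cgen k by auto
      qed
      moreover have "card ({..<n} - {i} - {k0}) = n - 2" using i k0n k0i by (simp add: card_Diff_subset)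
      ultimately show ?thesis by simp
    qed
    have "(\<Sum>k\<in>{..<n}. c k) = c i + (\<Sum>k\<in>{..<n} - {i}. c k)" using i by (simp add: sum.remove)
    also have "(\<Sum>k\<in>{..<n} - {i}. c k) = c k0 + (\<Sum>k\<in>{..<n} - {i} - {k0}. c k)"
      using k0n k0i by (simp add: sum.remove)
    finally show ?thesis using ci ck0 rest False unfolding c_def by simp
  qed
qed

lemma cancel_real: "(z::real) \<noteq> 0 \<Longrightarrow> b \<noteq> 0 \<Longrightarrow> c / (b * z) * z = c / b"
  by (simp add: field_simps)

lemma cancel_real2: "(c::real) \<noteq> 0 \<Longrightarrow> b \<noteq> 0 \<Longrightarrow> F \<noteq> 0 \<Longrightarrow> c / (b * (c * F)) * (- F) = - 1 / b"
  by (simp add: field_simps)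

lemma module_star:
  assumes n: "n \<ge> 2" and i: "i < n" and j: "j < n"
  shows "(\<lambda>p. (if p \<in> {q\<in>perms n. q i = j} then 1 else 0) - 1 / real n) \<in> module_std n"
  unfolding module_std_def
proof (intro CollectI exI[of _ "\<lambda>q. if q i = j then 1 else 0"] ballI)
  fix p assume pP: "p \<in> perms n"
  define T where "T = {q\<in>perms n. q i = j}"
  have finT: "finite T" unfolding T_def using finite_perms by simp
  have chi_id: "chi_std n id = real n - 1" unfolding chi_std_def by simp
  have chi_q: "chi_std n (inv p \<circ> q) = real (card {k\<in>{..<n}. q k = p k}) - 1" if q: "q \<in> perms n" for q
  proof -
    have "{k\<in>{..<n}. (inv p \<circ> q) k = k} = {k\<in>{..<n}. q k = p k}"
    proof (rule Collect_cong)
      fix k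
      have "inv p (q k) = k \<longleftrightarrow> q k = p k"
        using perms_inv_apply[OF pP] by metis
      then show "(k \<in> {..<n} \<and> (inv p \<circ> q) k = k) = (k \<in> {..<n} \<and> q k = p k)" by simp
    qed
    then show ?thesis unfolding chi_std_def by simp
  qed
  define N where "N = (\<Sum>q\<in>T. card {k\<in>{..<n}. q k = p k})"
  have N_eq: "N = (\<Sum>k\<in>{..<n}. card {q\<in>T. q k = p k})"
  proof -
    have "N = (\<Sum>q\<in>T. \<Sum>k\<in>{..<n}. if q k = p k then 1 else 0)"
      unfolding N_def by (rule sum.cong[OF refl], rule card_filter_sum) simp
    also have "\<dots> = (\<Sum>k\<in>{..<n}. \<Sum>q\<in>T. if q k = p k then 1 else 0)" by (rule sum.swap)
    also have "\<dots> = (\<Sum>k\<in>{..<n}. card {q\<in>T. q k = p k})"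
      using finT by (intro sum.cong[OF refl] card_filter_sum[symmetric])
    finally show ?thesis .
  qed
  have cT: "card T = fact (n - 1)" unfolding T_def using card_perms_fix1[OF i j] .
  have "(\<Sum>q\<in>perms n. E_std n p q * (if q i = j then 1 else 0)) = (\<Sum>q\<in>T. E_std n p q)"
  proof -
    have "(\<Sum>q\<in>perms n. E_std n p q * (if q i = j then 1 else 0)) = (\<Sum>q\<in>perms n. if q i = j then E_std n p q else 0)"
      by (rule sum.cong) auto
    also have "\<dots> = (\<Sum>q\<in>T. E_std n p q)" unfolding T_def using finite_perms[of n] by (simp add: sum.inter_filter)
    finally show ?thesis .
  qed
  also have "\<dots> = (\<Sum>q\<in>T. (real n - 1) / fact n * (real (card {k\<in>{..<n}. q k = p k}) - 1))"
    using chi_q chi_id unfolding E_std_def T_def by (intro sum.cong) auto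
  also have "\<dots> = (real n - 1) / fact n * (\<Sum>q\<in>T. (real (card {k\<in>{..<n}. q k = p k}) - 1))"
    by (simp add: sum_distrib_left)
  also have "(\<Sum>q\<in>T. (real (card {k\<in>{..<n}. q k = p k}) - 1)) = real N - real (card T)"
    unfolding N_def by (simp add: sum_subtractf)
  finally have main: "(\<Sum>q\<in>perms n. E_std n p q * (if q i = j then 1 else 0)) =
      (real n - 1) / fact n * (real N - real (fact (n - 1)))" using cT by simp
  have NN: "N = (if p i = j then fact (n - 1) + (n - 1) * fact (n - 2) else (n - 2) * fact (n - 2))"
    using N_eq count_N[OF n i j pP] unfolding T_def by simp
  obtain m where m: "n = m + 2" using n by (metis add.commute le_Suc_ex)
  have f1: "fact (n - 1) = (m + 1) * fact m" using m by (simp add: fact_Suc)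
  have f2r: "(fact n :: real) = (real m + 2) * ((real m + 1) * fact m)" using m by (simp add: fact_Suc algebra_simps)
  have nm1: "real n - 1 = real m + 1" using m by simp
  have fpos: "(fact m :: real) > 0" by simp
  have rn: "real n = real m + 2" using m by simp
  show "(if p \<in> {q\<in>perms n. q i = j} then 1 else 0) - 1 / real n =
        (\<Sum>q\<in>perms n. E_std n p q * (if q i = j then 1 else 0))"
  proof (cases "p i = j")
    case True
    have hN: "real N - real (fact (n - 1)) = (real m + 1) * fact m"
      using NN True f1 m by (simp add: algebra_simps)
    have "(\<Sum>q\<in>perms n. E_std n p q * (if q i = j then 1 else 0)) =
      (real m + 1) / ((real m + 2) * ((real m + 1) * fact m)) * ((real m + 1) * fact m)"
      using main[unfolded hN f2r nm1] .
    also have "\<dots> = (real m + 1) / (real m + 2)"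
      by (rule cancel_real) (use fpos in auto)
    also have "\<dots> = 1 - 1 / real n" unfolding rn by (simp add: field_simps)
    finally show ?thesis using True pP by simp
  next
    case False
    have hN: "real N - real (fact (n - 1)) = - fact m"
      using NN False f1 m by (simp add: algebra_simps)
    have "(\<Sum>q\<in>perms n. E_std n p q * (if q i = j then 1 else 0)) =
      (real m + 1) / ((real m + 2) * ((real m + 1) * fact m)) * (- fact m)"
      using main[unfolded hN f2r nm1] .
    also have "\<dots> = - 1 / (real m + 2)"
      by (rule cancel_real2) (use fpos in auto)
    also have "\<dots> = 0 - 1 / real n" unfolding rn by simp
    finally show ?thesis using False pP by simp
  qed
qed

theorem lemma8:
  fixes n :: nat and S :: "(nat \<Rightarrow> nat) set"
  assumes "n > 6"
    and "perm_independent n S"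
    and "card S = fact (n - 1)"
  shows "(\<lambda>p. (if p \<in> S then 1 else 0) - 1 / real n) \<in> module_std n"
proof -
  obtain i j where ij: "i < n" "j < n" "S = {p\<in>perms n. p i = j}"
    using star_general[of n S] assms by auto
  show ?thesis using module_star[of n i j] ij assms(1) by simp
qed



end
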